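(* Let $n=1$, write $x=x_1$, $p^j=w^j_1$ ($j=1,\dots,m$), and let $F^{jj'}=F^{j'j}$ and $F^j$ ($j,j'=1,\dots,m$) be $C^\infty$ functions of $(x,w,p)\in\mathbb R\times\mathbb R^m\times\mathbb R^m$. Consider the problem of finding a first-order $C^\infty$ function $f(x,w,p)$ on $\mathbb R\times\mathbb R^m\times\mathbb R^m$ with $$\frac{\partial^2f}{\partial p^j\partial p^{j'}}=F^{jj'},\qquad f_{w^j}-f_{p^jx}-\sum_{k}f_{p^jw^k}\,p^k=F^j\qquad(j,j'=1,\dots,m)$$ (equivalently $e^j[f]=F^j-\sum_{j'}F^{jj'}w^{j'}_2$). Define $$\Phi^{j'j}=\frac{\partial F^j}{\partial p^{j'}}+\frac{\partial F^{jj'}}{\partial x}+\sum_k\frac{\partial F^{jj'}}{\partial w^k}p^k .$$ Fix any constant vector $c=(c^1,\dots,c^m)\in\mathbb R^m$ and put $\phi^{j'j}(x,w)=\Phi^{j'j}(x,w,c)$, $\psi^j(x,w)=F^j(x,w,c)$. Then a solution $f$ exists if and only if for all $j,j',j'',k$: (a) $\partial F^{jj'}/\partial p^{j''}=\partial F^{jj''}/\partial p^{j'}$; (b) $\Phi^{j'j}+\Phi^{jj'}=0$; (c) $\partial\Phi^{j'j}/\partial p^{j''}=\partial F^{j'j''}/\partial w^j-\partial F^{jj''}/\partial w^{j'}$; (d) $\partial_{w^k}\phi^{j'j}+\partial_{w^{j'}}\phi^{jk}+\partial_{w^j}\phi^{kj'}=0$; (e) $\partial_{w^j}\psi^{j'}-\partial_{w^{j'}}\psi^j+\partial_x\phi^{j'j}+\sum_k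 c^k\partial_{w^k}\phi^{j'j}=0$. In that case, letting $\bar f$ be the unique solution of $\partial^2\bar f/\partial p^j\partial p^{j'}=F^{jj'}$ with $\bar f=\partial\bar f/\partial p^j=0$ at $p=c$, the solutions are exactly $$f=\bar f+\sum_j A^j(x,w)(p^j-c^j)+A(x,w),$$ where the $C^\infty$ functions $A^j,A$ of $(x,w)$ satisfy $$\partial_{w^j}A^{j'}-\partial_{w^{j'}}A^j=\phi^{j'j},\qquad \partial_{w^j}A=\psi^j+\partial_xA^j+\sum_k c^k\partial_{w^k}A^j\qquad(j,j'=1,\dots,m).$$
   Context: One independent variable $x$ and dependent variables $w^1,\dots,w^m$; first-order jet coordinates $p^j=w^j_1$ ($=dw^j/dx$), second-order $w^j_2$. For a first-order Lagrange function $f(x,w,p)$, $e^j[f]=f_{w^j}-\frac{d}{dx}f_{p^j}=f_{w^j}-f_{p^jx}-\sum_k f_{p^jw^k}p^k-\sum_k f_{p^jp^k}w^k_2$. (The base point $c$ is taken constant; the paper allows more general choices.) *)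

theory Defs
  imports "HOL-Analysis.Analysis"
begin

text \<open>C-infinity real-valued functions on a Euclidean space: differentiable everywhere,
  and every directional (Frechet) derivative is again C-infinity (greatest fixed point).\<close>
coinductive smooth_fn :: "('a::euclidean_space \<Rightarrow> real) \<Rightarrow> bool" where
  "(\<forall>z. f differentiable (at z)) \<Longrightarrow>
   (\<forall>v. smooth_fn (\<lambda>z. frechet_derivative f (at z) v)) \<Longrightarrow> smooth_fn f"

definition vupd :: "real^'m \<Rightarrow> 'm \<Rightarrow> real \<Rightarrow> real^'m" where
  "vupd w k t = (\<chi> i. if i = k then t else w $ i)"

type_synonym 'm fn3 = "real \<Rightarrow> real^'m \<Rightarrow> real^'m \<Rightarrow> real"
type_synonym 'm fn2 = "real \<Rightarrow> real^'m \<Rightarrow> real"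

definition smooth3 :: "'m::finite fn3 \<Rightarrow> bool" where
  "smooth3 g \<longleftrightarrow> smooth_fn (\<lambda>(x, w, p). g x w p)"
definition smooth2 :: "'m::finite fn2 \<Rightarrow> bool" where
  "smooth2 g \<longleftrightarrow> smooth_fn (\<lambda>(x, w). g x w)"

definition Dx :: "'m::finite fn3 \<Rightarrow> 'm fn3" where
  "Dx g = (\<lambda>x w p. deriv (\<lambda>t. g t w p) x)"
definition Dw :: "'m::finite \<Rightarrow> 'm fn3 \<Rightarrow> 'm fn3" where
  "Dw k g = (\<lambda>x w p. deriv (\<lambda>t. g x (vupd w k t) p) (w $ k))"
definition Dp :: "'m::finite \<Rightarrow> 'm fn3 \<Rightarrow> 'm fn3" where
  "Dp k g = (\<lambda>x w p. deriv (\<lambda>t. g x w (vupd p k t)) (p $ k))"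
definition Dx2 :: "'m::finite fn2 \<Rightarrow> 'm fn2" where
  "Dx2 g = (\<lambda>x w. deriv (\<lambda>t. g t w) x)"
definition Dw2 :: "'m::finite \<Rightarrow> 'm fn2 \<Rightarrow> 'm fn2" where
  "Dw2 k g = (\<lambda>x w. deriv (\<lambda>t. g x (vupd w k t)) (w $ k))"

definition is_solution :: "('m::finite \<Rightarrow> 'm \<Rightarrow> 'm fn3) \<Rightarrow> ('m \<Rightarrow> 'm fn3) \<Rightarrow> 'm fn3 \<Rightarrow> bool" where
  "is_solution FF F1 f \<longleftrightarrow> smooth3 f \<and>
     (\<forall>j j' x w p. Dp j (Dp j' f) x w p = FF j j' x w p) \<and>
     (\<forall>j x w p. Dw j f x w p - Dx (Dp j f) x w p
                 - (\<Sum>k\<in>UNIV. Dw k (Dp j f) x w p * p $ k) = F1 j x w p)"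

definition Phi :: "('m::finite \<Rightarrow> 'm \<Rightarrow> 'm fn3) \<Rightarrow> ('m \<Rightarrow> 'm fn3) \<Rightarrow> 'm \<Rightarrow> 'm \<Rightarrow> 'm fn3" where
  "Phi FF F1 j' j = (\<lambda>x w p. Dp j' (F1 j) x w p + Dx (FF j j') x w p
                      + (\<Sum>k\<in>UNIV. Dw k (FF j j') x w p * p $ k))"

end

theory Submission
  imports Defs
begin


definition pd :: "('a::euclidean_space \<Rightarrow> real) \<Rightarrow> 'a \<Rightarrow> 'a \<Rightarrow> real" where
  "pd f v z = frechet_derivative f (at z) v"

lemma smooth_differentiable: "smooth_fn f \<Longrightarrow> f differentiable (at z)"
  by (erule smooth_fn.cases) auto

lemma smooth_pd: "smooth_fn f \<Longrightarrow> smooth_fn (pd f v)"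
  unfolding pd_def by (erule smooth_fn.cases) auto

lemma smooth_has_derivative: "smooth_fn f \<Longrightarrow> (f has_derivative (\<lambda>v. pd f v z)) (at z)"
  unfolding pd_def using smooth_differentiable frechet_derivative_works by blast

lemma smooth_has_derivative_within: "smooth_fn f \<Longrightarrow> (f has_derivative (\<lambda>v. pd f v z)) (at z within S)"
  using smooth_has_derivative has_derivative_at_withinI by blast

lemma pd_linear: "smooth_fn f \<Longrightarrow> linear (\<lambda>v. pd f v z)"
  using smooth_has_derivative has_derivative_linear by blast

lemma pd_add: "smooth_fn f \<Longrightarrow> pd f (u + v) z = pd f u z + pd f v z"
  using linear_add[OF pd_linear[of f z]] by simp

lemma pd_scale: "smooth_fn f \<Longrightarrow> pd f (a *\<^sub>R v) z = a * pd f v z"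
  using linear_scale[OF pd_linear[of f z]] by simp

lemma pd_zero: "smooth_fn f \<Longrightarrow> pd f 0 z = 0"
  using linear_0[OF pd_linear[of f z]] by simp

lemma pd_sum: "smooth_fn f \<Longrightarrow> pd f (\<Sum>i\<in>I. v i) z = (\<Sum>i\<in>I. pd f (v i) z)"
  using linear_sum[OF pd_linear[of f z]] by simp

lemma smooth_isCont: "smooth_fn f \<Longrightarrow> isCont f z"
  using smooth_differentiable differentiable_imp_continuous_within by blast

lemma smooth_continuous_on: "smooth_fn f \<Longrightarrow> continuous_on S f"
  by (simp add: continuous_at_imp_continuous_on smooth_isCont)

lemma smooth_line_deriv:
  assumes "smooth_fn f"
  shows "((\<lambda>t. f (z + t *\<^sub>R v)) has_real_derivative pd f v (z + t *\<^sub>R v)) (at t within S)"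
proof -
  have "((\<lambda>t. z + t *\<^sub>R v) has_derivative (\<lambda>h. h *\<^sub>R v)) (at t within S)"
    by (auto intro!: derivative_eq_intros)
  from has_derivative_compose[OF this smooth_has_derivative[OF assms]]
  have "((\<lambda>t. f (z + t *\<^sub>R v)) has_derivative (\<lambda>h. pd f (h *\<^sub>R v) (z + t *\<^sub>R v))) (at t within S)"
    by (simp add: o_def)
  then show ?thesis
    by (simp add: has_field_derivative_def pd_scale[OF assms] mult.commute[of _ "pd f v _"])
qed

lemma pd_eq_has_derivative:
  assumes "(f has_derivative f') (at z)" shows "pd f v z = f' v"
  using frechet_derivative_at[OF assms] unfolding pd_def by simp

lemma smooth_affine:
  assumes "linear l" shows "smooth_fn (\<lambda>z. l z + k)"
proof -
  define X where "X = (\<lambda>f::'a\<Rightarrow>real. \<exists>l k. linear l \<and> f = (\<lambda>z. l z + k))"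
  have "X (\<lambda>z. l z + k)" using assms unfolding X_def by blast
  then show ?thesis
  proof (coinduct rule: smooth_fn.coinduct)
    case (smooth_fn f)
    then obtain l k where l: "linear l" and f: "f = (\<lambda>z. l z + k)" unfolding X_def by blast
    have d: "\<And>z. (f has_derivative l) (at z)"
      unfolding f using l by (auto intro!: has_derivative_add_const bounded_linear_imp_has_derivative simp: linear_conv_bounded_linear)
    have "\<And>z v. frechet_derivative f (at z) v = l v"
      using frechet_derivative_at[OF d] by simp
    moreover have "linear (\<lambda>z::'a. 0::real)" by (simp add: linear_zero)
    ultimately have "\<And>v. X (\<lambda>z. frechet_derivative f (at z) v)"
      unfolding X_def by (intro allI exI[of _ "\<lambda>z. 0"]) auto
    then show ?case using d differentiableI by blast
  qed
qed

lemma smooth_const: "smooth_fn (\<lambda>z. k)"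
  using smooth_affine[of "\<lambda>z. 0" k] by (simp add: linear_zero)

lemma smooth_linear: "linear l \<Longrightarrow> smooth_fn l"
  using smooth_affine[of l 0] by simp

lemma smooth_inner: "smooth_fn (\<lambda>z. z \<bullet> b)"
  by (rule smooth_linear) (simp add: bounded_linear_inner_left bounded_linear.linear)

inductive CL :: "'a::euclidean_space itself \<Rightarrow> ('b::euclidean_space \<Rightarrow> real) \<Rightarrow> bool" for T where
  CL_base: "smooth_fn f \<Longrightarrow> CL T f"
| CL_comp: "smooth_fn (h::'a \<Rightarrow> real) \<Longrightarrow> (\<forall>i\<in>Basis. smooth_fn (\<lambda>z. \<Gamma> z \<bullet> i)) \<Longrightarrow> CL T (\<lambda>z. h (\<Gamma> z))"
| CL_add: "CL T f \<Longrightarrow> CL T g \<Longrightarrow> CL T (\<lambda>z. f z + g z)"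
| CL_mult: "CL T f \<Longrightarrow> CL T g \<Longrightarrow> CL T (\<lambda>z. f z * g z)"

lemma CL_sum: "finite I \<Longrightarrow> (\<And>i. i \<in> I \<Longrightarrow> CL T (g i)) \<Longrightarrow> CL T (\<lambda>z. \<Sum>i\<in>I. g i z)"
proof (induction I rule: finite_induct)
  case empty then show ?case using CL_base[OF smooth_const[of 0]] by simp
next
  case (insert x F) then show ?case using CL_add[of T "g x" "\<lambda>z. \<Sum>i\<in>F. g i z"] by simp
qed

lemma vec_has_derivative_components:
  fixes \<Gamma> :: "'b::euclidean_space \<Rightarrow> 'a::euclidean_space"
  assumes "\<forall>i\<in>Basis. smooth_fn (\<lambda>z. \<Gamma> z \<bullet> i)"
  shows "(\<Gamma> has_derivative (\<lambda>v. \<Sum>i\<in>Basis. pd (\<lambda>z. \<Gamma> z \<bullet> i) v z *\<^sub>R i)) (at z)"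
proof -
  have e: "\<Gamma> = (\<lambda>z. \<Sum>i\<in>Basis. (\<Gamma> z \<bullet> i) *\<^sub>R i)" by (simp add: euclidean_representation)
  have "((\<lambda>z. \<Sum>i\<in>Basis. (\<Gamma> z \<bullet> i) *\<^sub>R i) has_derivative (\<lambda>v. \<Sum>i\<in>Basis. pd (\<lambda>z. \<Gamma> z \<bullet> i) v z *\<^sub>R i)) (at z)"
    by (intro has_derivative_sum has_derivative_scaleR_left smooth_has_derivative) (use assms in auto)
  then show ?thesis using e by simp
qed

lemma CL_step: "CL T f \<Longrightarrow> (\<forall>z. f differentiable (at z)) \<and> (\<forall>v. CL T (\<lambda>z. frechet_derivative f (at z) v))"
proof (induction rule: CL.induct)
  case (CL_base f)
  then show ?case using smooth_differentiable smooth_pd[of f] CL.CL_base unfolding pd_def by metis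
next
  case (CL_comp h \<Gamma>)
  have hd: "\<And>z. ((\<lambda>z. h (\<Gamma> z)) has_derivative
     (\<lambda>v. \<Sum>i\<in>Basis. pd (\<lambda>z. \<Gamma> z \<bullet> i) v z * pd h i (\<Gamma> z))) (at z)"
  proof -
    fix z
    from has_derivative_compose[OF vec_has_derivative_components[OF CL_comp(2), of z] smooth_has_derivative[OF CL_comp(1)]]
    have "((\<lambda>z. h (\<Gamma> z)) has_derivative (\<lambda>v. pd h (\<Sum>i\<in>Basis. pd (\<lambda>z. \<Gamma> z \<bullet> i) v z *\<^sub>R i) (\<Gamma> z))) (at z)"
      by (simp add: o_def)
    then show "?thesis z"
      by (simp add: pd_sum[OF CL_comp(1)] pd_scale[OF CL_comp(1)])
  qed
  have "\<And>v. CL T (\<lambda>z. frechet_derivative (\<lambda>z. h (\<Gamma> z)) (at z) v)"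
  proof -
    fix v
    have "CL T (\<lambda>z. \<Sum>i\<in>Basis. pd (\<lambda>z. \<Gamma> z \<bullet> i) v z * pd h i (\<Gamma> z))"
    proof (rule CL_sum)
      fix i assume "i \<in> (Basis::'a set)"
      show "CL T (\<lambda>z. pd (\<lambda>z. \<Gamma> z \<bullet> i) v z * pd h i (\<Gamma> z))"
        apply (rule CL.CL_mult)
         apply (rule CL.CL_base, rule smooth_pd) using CL_comp \<open>i \<in> Basis\<close> apply blast
        apply (rule CL.CL_comp[of "pd h i"]) using CL_comp smooth_pd by auto
    qed simp
    moreover have "(\<lambda>z. frechet_derivative (\<lambda>z. h (\<Gamma> z)) (at z) v) = (\<lambda>z. \<Sum>i\<in>Basis. pd (\<lambda>z. \<Gamma> z \<bullet> i) v z * pd h i (\<Gamma> z))"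
      by (intro ext) (simp add: frechet_derivative_at[OF hd, symmetric])
    ultimately show "?thesis v" by simp
  qed
  then show ?case using hd differentiableI by blast
next
  case (CL_add f g)
  have d: "\<And>z. ((\<lambda>z. f z + g z) has_derivative (\<lambda>v. frechet_derivative f (at z) v + frechet_derivative g (at z) v)) (at z)"
    using CL_add by (intro has_derivative_add frechet_derivative_works[THEN iffD1]) auto
  have "\<And>v. CL T (\<lambda>z. frechet_derivative (\<lambda>z. f z + g z) (at z) v)"
  proof -
    fix v
    have "(\<lambda>z. frechet_derivative (\<lambda>z. f z + g z) (at z) v) = (\<lambda>z. frechet_derivative f (at z) v + frechet_derivative g (at z) v)"
      by (intro ext) (simp add: frechet_derivative_at[OF d, symmetric])
    then show "?thesis v" using CL_add CL.CL_add[of T "\<lambda>z. frechet_derivative f (at z) v" "\<lambda>z. frechet_derivative g (at z) v"] by simp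
  qed
  then show ?case using d differentiableI by blast
next
  case (CL_mult f g)
  have d: "\<And>z. ((\<lambda>z. f z * g z) has_derivative (\<lambda>v. f z * frechet_derivative g (at z) v + frechet_derivative f (at z) v * g z)) (at z)"
    using CL_mult by (intro has_derivative_mult frechet_derivative_works[THEN iffD1]) auto
  have cm: "\<And>v. CL T (\<lambda>z. f z * frechet_derivative g (at z) v + frechet_derivative f (at z) v * g z)"
    using CL_mult by (intro CL.CL_add CL.CL_mult) auto
  then have "\<And>v. CL T (\<lambda>z. frechet_derivative (\<lambda>z. f z * g z) (at z) v)"
  proof -
    fix v
    have "(\<lambda>z. frechet_derivative (\<lambda>z. f z * g z) (at z) v) = (\<lambda>z. f z * frechet_derivative g (at z) v + frechet_derivative f (at z) v * g z)"
      by (intro ext) (simp add: frechet_derivative_at[OF d, symmetric])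
    then show "?thesis v" using cm by simp
  qed
  then show ?case using d differentiableI by blast
qed

lemma CL_smooth: assumes "CL T f" shows "smooth_fn f"
  using assms
proof (coinduct rule: smooth_fn.coinduct)
  case (smooth_fn f) then show ?case using CL_step by blast
qed

lemma smooth_add: "smooth_fn f \<Longrightarrow> smooth_fn g \<Longrightarrow> smooth_fn (\<lambda>z. f z + g z)"
  by (rule CL_smooth[where T="TYPE(real)"]) (intro CL.intros)

lemma smooth_mult: "smooth_fn f \<Longrightarrow> smooth_fn g \<Longrightarrow> smooth_fn (\<lambda>z. f z * g z)"
  by (rule CL_smooth[where T="TYPE(real)"]) (intro CL.intros)

lemma smooth_comp:
  fixes h :: "'a::euclidean_space \<Rightarrow> real" and \<Gamma> :: "'b::euclidean_space \<Rightarrow> 'a"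
  shows "smooth_fn h \<Longrightarrow> (\<forall>i\<in>Basis. smooth_fn (\<lambda>z. \<Gamma> z \<bullet> i)) \<Longrightarrow> smooth_fn (\<lambda>z. h (\<Gamma> z))"
  by (rule CL_smooth[where T="TYPE('a)"]) (intro CL.intros)

lemma smooth_sum: "finite I \<Longrightarrow> (\<And>i. i \<in> I \<Longrightarrow> smooth_fn (g i)) \<Longrightarrow> smooth_fn (\<lambda>z. \<Sum>i\<in>I. g i z)"
  by (rule CL_smooth[where T="TYPE(real)"]) (intro CL_sum CL.intros)

lemma smooth_scale: "smooth_fn f \<Longrightarrow> smooth_fn (\<lambda>z. a * f z)"
  using smooth_mult[OF smooth_const] by blast

lemma smooth_uminus: "smooth_fn f \<Longrightarrow> smooth_fn (\<lambda>z. - f z)"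
  using smooth_scale[of f "-1"] by simp

lemma smooth_diff: "smooth_fn f \<Longrightarrow> smooth_fn g \<Longrightarrow> smooth_fn (\<lambda>z. f z - g z)"
proof -
  assume "smooth_fn f" "smooth_fn g"
  then have "smooth_fn (\<lambda>z. f z + - g z)" by (intro smooth_add smooth_uminus)
  then show ?thesis by simp
qed


lemma pd_pair_has_derivative:
  fixes g :: "real \<times> 'a::euclidean_space \<Rightarrow> real"
  assumes "smooth_fn g"
  shows "((\<lambda>z. g (t, z)) has_derivative (\<lambda>v. pd g (0, v) (t, z))) (at z)"
proof -
  have "((\<lambda>z. (t, z)) has_derivative (\<lambda>v. (0, v))) (at z)"
    by (auto intro!: derivative_eq_intros)
  from has_derivative_compose[OF this smooth_has_derivative[OF assms]] show ?thesis by (simp add: o_def)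
qed

lemma bounded_linear_pd_pair:
  fixes g :: "real \<times> 'a::euclidean_space \<Rightarrow> real"
  assumes "smooth_fn g"
  shows "bounded_linear (\<lambda>v. pd g (0, v) (t, z))"
  using pd_pair_has_derivative[OF assms] has_derivative_bounded_linear by blast

lemma integral_param_has_derivative:
  fixes g :: "real \<times> 'a::euclidean_space \<Rightarrow> real"
  assumes g: "smooth_fn g"
  shows "((\<lambda>z. integral {0..1} (\<lambda>t. g (t, z))) has_derivative
          (\<lambda>v. integral {0..1} (\<lambda>t. pd g (0, v) (t, z)))) (at z)"
proof -
  define fx where "fx = (\<lambda>z t. Blinfun (\<lambda>v. pd g (0, v) (t, z)))"
  have fxa: "\<And>z t v. blinfun_apply (fx z t) v = pd g (0, v) (t, z)"
    unfolding fx_def using bounded_linear_pd_pair[OF g] by (simp add: bounded_linear_Blinfun_apply)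
  have cg: "continuous_on S g" for S using smooth_continuous_on[OF g] .
  have cont2: "continuous_on S (\<lambda>(z, t). h (t, z))" if "smooth_fn h" for h :: "real \<times> 'a \<Rightarrow> real" and S
  proof -
    have "continuous_on S ((\<lambda>x. h x) \<circ> (\<lambda>(z, t). (t, z)))"
      by (intro continuous_on_compose smooth_continuous_on[OF that])
         (auto intro!: continuous_intros simp: split_beta)
    then show ?thesis by (simp add: o_def split_beta)
  qed
  have "((\<lambda>z. integral (cbox 0 1) (\<lambda>t. g (t, z))) has_derivative blinfun_apply (integral (cbox 0 1) (fx z))) (at z within UNIV)"
  proof (rule leibniz_rule[where f="\<lambda>z t. g (t, z)" and fx=fx])
    fix x and t :: real
    show "((\<lambda>x. g (t, x)) has_derivative blinfun_apply (fx x t)) (at x within UNIV)"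
    proof -
      have "blinfun_apply (fx x t) = (\<lambda>v. pd g (0, v) (t, x))" using fxa by (intro ext) simp
      then show ?thesis using pd_pair_has_derivative[OF g, of t x] by simp
    qed
  next
    fix x
    have "continuous_on (cbox 0 1) (\<lambda>t. g (t, x))"
      by (intro continuous_on_compose2[OF cg]) (auto intro!: continuous_intros)
    then show "(\<lambda>t. g (t, x)) integrable_on cbox 0 1" by (rule integrable_continuous)
  next
    show "continuous_on (UNIV \<times> cbox 0 1) (\<lambda>(x, t). fx x t)"
    proof (rule continuous_on_blinfun_componentwise)
      fix i :: 'a
      have "continuous_on (UNIV \<times> cbox 0 1) (\<lambda>(x, t). pd g (0, i) (t, x))"
        by (rule cont2[OF smooth_pd[OF g]])
      then show "continuous_on (UNIV \<times> cbox 0 1) (\<lambda>x. blinfun_apply (case x of (x, t) \<Rightarrow> fx x t) i)"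
        by (simp add: split_beta fxa)
    qed
  qed auto
  moreover have "blinfun_apply (integral (cbox 0 1) (fx z)) = (\<lambda>v. integral {0..1} (\<lambda>t. pd g (0, v) (t, z)))"
  proof
    fix v
    have "continuous_on (cbox 0 1) (fx z)"
    proof (rule continuous_on_blinfun_componentwise)
      fix i :: 'a
      have "continuous_on (cbox 0 1) (\<lambda>t. pd g (0, i) (t, z))"
        by (intro continuous_on_compose2[OF smooth_continuous_on[OF smooth_pd[OF g]]]) (auto intro!: continuous_intros)
      then show "continuous_on (cbox 0 1) (\<lambda>t. blinfun_apply (fx z t) i)" by (simp add: fxa)
    qed
    then have "fx z integrable_on cbox 0 1" by (rule integrable_continuous)
    then show "blinfun_apply (integral (cbox 0 1) (fx z)) v = integral {0..1} (\<lambda>t. pd g (0, v) (t, z))"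
      by (simp add: blinfun_apply_integral fxa)
  qed
  ultimately show ?thesis by simp
qed

lemma smooth_integral:
  fixes g :: "real \<times> 'a::euclidean_space \<Rightarrow> real"
  assumes "smooth_fn g"
  shows "smooth_fn (\<lambda>z. integral {0..1} (\<lambda>t. g (t, z)))"
proof -
  define X where "X = (\<lambda>F::'a \<Rightarrow> real. \<exists>g::real \<times> 'a \<Rightarrow> real. smooth_fn g \<and> F = (\<lambda>z. integral {0..1} (\<lambda>t. g (t, z))))"
  have X0: "X (\<lambda>z. integral {0..1} (\<lambda>t. g (t, z)))" using assms unfolding X_def by (intro exI[of _ g]) simp
  show ?thesis
  proof (rule smooth_fn.coinduct[of X, OF X0])
    fix F assume "X F"
    then obtain g :: "real \<times> 'a \<Rightarrow> real" where gF: "smooth_fn g \<and> F = (\<lambda>z. integral {0..1} (\<lambda>t. g (t, z)))"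
      unfolding X_def by (elim exE) blast
    then have g: "smooth_fn g" and F: "F = (\<lambda>z. integral {0..1} (\<lambda>t. g (t, z)))" by simp_all
    have d: "\<And>z. (F has_derivative (\<lambda>v. integral {0..1} (\<lambda>t. pd g (0, v) (t, z)))) (at z)"
      unfolding F by (rule integral_param_has_derivative[OF g])
    have Xd: "\<And>v. X (\<lambda>z. frechet_derivative F (at z) v)"
    proof -
      fix v
      have e: "(\<lambda>z. frechet_derivative F (at z) v) = (\<lambda>z. integral {0..1} (\<lambda>t. pd g (0, v) (t, z)))"
        by (intro ext) (simp add: frechet_derivative_at[OF d, symmetric])
      show "X (\<lambda>z. frechet_derivative F (at z) v)"
        unfolding X_def by (rule exI[of _ "pd g (0, v)"], rule conjI[OF smooth_pd[OF g] e])
    qed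
    then show "\<exists>f. F = f \<and> (\<forall>z. f differentiable at z) \<and>
          (\<forall>v. X (\<lambda>z. frechet_derivative f (at z) v) \<or> smooth_fn (\<lambda>z. frechet_derivative f (at z) v))"
    proof (intro exI conjI allI disjI1)
      show "F = F" ..
      fix z show "F differentiable at z" using d differentiableI by blast
    qed (rule Xd)
  qed
qed


lemma cont_smooth_comp: "smooth_fn f \<Longrightarrow> continuous_on S g \<Longrightarrow> continuous_on S (\<lambda>x. f (g x))"
  using continuous_on_compose2[OF smooth_continuous_on[of f UNIV]] by blast

lemma smooth_ftc:
  assumes G: "smooth_fn G"
  shows "G (z + w) - G z = integral {0..1} (\<lambda>\<tau>. pd G w (z + \<tau> *\<^sub>R w))"
proof -
  have "((\<lambda>\<tau>. pd G w (z + \<tau> *\<^sub>R w)) has_integral (G (z + 1 *\<^sub>R w) - G (z + 0 *\<^sub>R w))) {0..1}"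
  proof (rule fundamental_theorem_of_calculus)
    fix x :: real assume "x \<in> {0..1}"
    show "((\<lambda>\<tau>. G (z + \<tau> *\<^sub>R w)) has_vector_derivative pd G w (z + x *\<^sub>R w)) (at x within {0..1})"
      using smooth_line_deriv[OF G] by (simp add: has_real_derivative_iff_has_vector_derivative[symmetric])
  qed simp
  then show ?thesis by (simp add: integral_unique)
qed

lemma leibniz1:
  fixes h hs :: "real \<Rightarrow> real \<Rightarrow> real"
  assumes d: "\<And>s \<tau>. ((\<lambda>s. h s \<tau>) has_real_derivative hs s \<tau>) (at s)"
    and c1: "\<And>s. continuous_on {0..1} (h s)"
    and c2: "continuous_on UNIV (\<lambda>(s, \<tau>). hs s \<tau>)"
  shows "((\<lambda>s. integral {0..1} (h s)) has_real_derivative integral {0..1} (hs s0)) (at s0)"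
proof -
  have "((\<lambda>s. integral (cbox 0 1) (h s)) has_field_derivative integral (cbox 0 1) (hs s0)) (at s0 within UNIV)"
  proof (rule leibniz_rule_field_derivative)
    fix x t show "((\<lambda>x. h x t) has_field_derivative hs x t) (at x within UNIV)" using d by simp
  next
    fix x show "h x integrable_on cbox 0 1" using c1 integrable_continuous_real by auto
  next
    show "continuous_on (UNIV \<times> cbox 0 1) (\<lambda>(x, t). hs x t)"
      using c2 continuous_on_subset by blast
  qed auto
  then show ?thesis by simp
qed

lemma pd_symmetric:
  assumes G: "smooth_fn G"
  shows "pd (pd G u) v z = pd (pd G v) u z"
proof -
  define P where "P = pd (pd G u) v"
  have sP: "smooth_fn P" unfolding P_def by (intro smooth_pd G)
  have sGu: "smooth_fn (pd G u)" by (intro smooth_pd G)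
  have sGv: "smooth_fn (pd G v)" by (intro smooth_pd G)
  have step1: "G (z + s *\<^sub>R u + r *\<^sub>R v) = G (z + r *\<^sub>R v) + integral {0..1} (\<lambda>\<tau>. s * pd G u (z + \<tau> *\<^sub>R s *\<^sub>R u + r *\<^sub>R v))" for s r
  proof -
    have "G ((z + r *\<^sub>R v) + s *\<^sub>R u) - G (z + r *\<^sub>R v) = integral {0..1} (\<lambda>\<tau>. pd G (s *\<^sub>R u) (z + r *\<^sub>R v + \<tau> *\<^sub>R (s *\<^sub>R u)))"
      by (rule smooth_ftc[OF G])
    also have "\<dots> = integral {0..1} (\<lambda>\<tau>. s * pd G u (z + \<tau> *\<^sub>R s *\<^sub>R u + r *\<^sub>R v))"
    proof -
      have "\<And>\<tau>. z + r *\<^sub>R v + \<tau> *\<^sub>R (s *\<^sub>R u) = z + \<tau> *\<^sub>R s *\<^sub>R u + r *\<^sub>R v"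
        by (simp add: algebra_simps)
      then show ?thesis by (simp only: pd_scale[OF G])
    qed
    finally have "G ((z + r *\<^sub>R v) + s *\<^sub>R u) = G (z + r *\<^sub>R v) + integral {0..1} (\<lambda>\<tau>. s * pd G u (z + \<tau> *\<^sub>R s *\<^sub>R u + r *\<^sub>R v))"
      by (simp only: diff_eq_eq add.commute)
    moreover have "(z + r *\<^sub>R v) + s *\<^sub>R u = z + s *\<^sub>R u + r *\<^sub>R v" by (simp add: algebra_simps)
    ultimately show ?thesis by simp
  qed
  have step2: "pd G v (z + s *\<^sub>R u) = pd G v z + s * integral {0..1} (\<lambda>\<tau>. P (z + (\<tau> * s) *\<^sub>R u))" for s
  proof -
    have d1: "((\<lambda>r. G ((z + s *\<^sub>R u) + r *\<^sub>R v)) has_real_derivative pd G v ((z + s *\<^sub>R u) + 0 *\<^sub>R v)) (at 0)"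
      by (rule smooth_line_deriv[OF G])
    have d2: "((\<lambda>r. G (z + r *\<^sub>R v)) has_real_derivative pd G v (z + 0 *\<^sub>R v)) (at 0)"
      by (rule smooth_line_deriv[OF G])
    have d3: "((\<lambda>r. integral {0..1} (\<lambda>\<tau>. s * pd G u (z + \<tau> *\<^sub>R s *\<^sub>R u + r *\<^sub>R v)))
               has_real_derivative integral {0..1} (\<lambda>\<tau>. s * P (z + \<tau> *\<^sub>R s *\<^sub>R u + 0 *\<^sub>R v))) (at 0)"
    proof (rule leibniz1)
      fix r \<tau>
      show "((\<lambda>r. s * pd G u (z + \<tau> *\<^sub>R s *\<^sub>R u + r *\<^sub>R v)) has_real_derivative s * P (z + \<tau> *\<^sub>R s *\<^sub>R u + r *\<^sub>R v)) (at r)"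
        unfolding P_def by (intro DERIV_cmult smooth_line_deriv sGu)
    next
      fix r show "continuous_on {0..1} (\<lambda>\<tau>. s * pd G u (z + \<tau> *\<^sub>R s *\<^sub>R u + r *\<^sub>R v))"
        by (intro continuous_intros cont_smooth_comp[OF sGu])
    next
      show "continuous_on UNIV (\<lambda>(r, \<tau>). s * P (z + \<tau> *\<^sub>R s *\<^sub>R u + r *\<^sub>R v))"
        by (simp only: split_beta') (intro continuous_intros cont_smooth_comp[OF sP])
    qed
    have "((\<lambda>r. G (z + r *\<^sub>R v) + integral {0..1} (\<lambda>\<tau>. s * pd G u (z + \<tau> *\<^sub>R s *\<^sub>R u + r *\<^sub>R v)))
           has_real_derivative pd G v (z + 0 *\<^sub>R v) + integral {0..1} (\<lambda>\<tau>. s * P (z + \<tau> *\<^sub>R s *\<^sub>R u + 0 *\<^sub>R v))) (at 0)"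
      by (rule DERIV_add[OF d2 d3])
    moreover have eq: "(\<lambda>r. G ((z + s *\<^sub>R u) + r *\<^sub>R v)) = (\<lambda>r. G (z + r *\<^sub>R v) + integral {0..1} (\<lambda>\<tau>. s * pd G u (z + \<tau> *\<^sub>R s *\<^sub>R u + r *\<^sub>R v)))"
      by (intro ext step1)
    ultimately have d4: "((\<lambda>r. G ((z + s *\<^sub>R u) + r *\<^sub>R v)) has_real_derivative pd G v (z + 0 *\<^sub>R v) + integral {0..1} (\<lambda>\<tau>. s * P (z + \<tau> *\<^sub>R s *\<^sub>R u + 0 *\<^sub>R v))) (at 0)"
      by (simp only:)
    have "pd G v ((z + s *\<^sub>R u) + 0 *\<^sub>R v) = pd G v (z + 0 *\<^sub>R v) + integral {0..1} (\<lambda>\<tau>. s * P (z + \<tau> *\<^sub>R s *\<^sub>R u + 0 *\<^sub>R v))"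
      by (rule DERIV_unique[OF d1 d4])
    then have "pd G v (z + s *\<^sub>R u) = pd G v z + integral {0..1} (\<lambda>\<tau>. s * P (z + (\<tau> * s) *\<^sub>R u))"
      by simp
    then show ?thesis by simp
  qed
  define I where "I = (\<lambda>s. integral {0..1} (\<lambda>\<tau>. P (z + (\<tau> * s) *\<^sub>R u)))"
  have dI: "(I has_real_derivative integral {0..1} (\<lambda>\<tau>. \<tau> * pd P u (z + (\<tau> * 0) *\<^sub>R u))) (at 0)"
    unfolding I_def
  proof (rule leibniz1)
    fix s \<tau>
    have "((\<lambda>s. P (z + s *\<^sub>R (\<tau> *\<^sub>R u))) has_real_derivative pd P (\<tau> *\<^sub>R u) (z + s *\<^sub>R (\<tau> *\<^sub>R u))) (at s)"
      by (rule smooth_line_deriv[OF sP])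
    then show "((\<lambda>s. P (z + (\<tau> * s) *\<^sub>R u)) has_real_derivative \<tau> * pd P u (z + (\<tau> * s) *\<^sub>R u)) (at s)"
      by (simp add: pd_scale[OF sP] mult.commute)
  next
    fix s show "continuous_on {0..1} (\<lambda>\<tau>. P (z + (\<tau> * s) *\<^sub>R u))"
      by (intro continuous_intros cont_smooth_comp[OF sP])
  next
    show "continuous_on UNIV (\<lambda>(s, \<tau>). \<tau> * pd P u (z + (\<tau> * s) *\<^sub>R u))"
      by (simp only: split_beta') (intro continuous_intros cont_smooth_comp[OF smooth_pd[OF sP]])
  qed
  have "((\<lambda>s. s * I s) has_real_derivative I 0) (at 0)"
    using DERIV_mult[OF DERIV_ident dI] by simp
  from DERIV_add[OF DERIV_const this]
  have A: "((\<lambda>s. pd G v z + s * I s) has_real_derivative I 0) (at 0)" by simp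
  have B: "((\<lambda>s. pd G v (z + s *\<^sub>R u)) has_real_derivative pd (pd G v) u (z + 0 *\<^sub>R u)) (at 0)"
    by (rule smooth_line_deriv[OF sGv])
  have e: "(\<lambda>s. pd G v (z + s *\<^sub>R u)) = (\<lambda>s. pd G v z + s * I s)"
    unfolding I_def by (intro ext step2)
  have B': "((\<lambda>s. pd G v z + s * I s) has_real_derivative pd (pd G v) u z) (at 0)"
    using B unfolding e by simp
  have "pd (pd G v) u z = I 0" by (rule DERIV_unique[OF B' A])
  also have "I 0 = P z" unfolding I_def by simp
  finally show ?thesis unfolding P_def by simp
qed


lemma smooth_fst: "smooth_fn (\<lambda>p::real \<times> 'a::euclidean_space. fst p)"
proof -
  have "smooth_fn (\<lambda>p::real \<times> 'a. p \<bullet> (1, 0))" by (rule smooth_inner)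
  then show ?thesis by (simp add: inner_Pair_0)
qed

lemma smooth_snd_inner: "smooth_fn (\<lambda>p::real \<times> 'a::euclidean_space. snd p \<bullet> b)"
proof -
  have "smooth_fn (\<lambda>p::real \<times> 'a. p \<bullet> (0, b))" by (rule smooth_inner)
  then show ?thesis by (simp add: inner_Pair_0)
qed

lemma DERIV_eqI: "(f has_field_derivative D) F \<Longrightarrow> D = E \<Longrightarrow> (f has_field_derivative E) F"
  by simp

lemma DERIV_line_unique:
  assumes "smooth_fn Q" "((\<lambda>s. Q (z + s *\<^sub>R v)) has_real_derivative D) (at 0)"
  shows "pd Q v z = D"
proof -
  have "((\<lambda>s. Q (z + s *\<^sub>R v)) has_real_derivative pd Q v (z + 0 *\<^sub>R v)) (at 0)"
    by (rule smooth_line_deriv[OF assms(1)])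
  from DERIV_unique[OF this assms(2)] show ?thesis by simp
qed

lemmas smooth_intros = smooth_add smooth_mult smooth_diff smooth_sum smooth_uminus smooth_inner
  smooth_fst smooth_snd_inner smooth_const

locale poinc =
  fixes e :: "'i::finite \<Rightarrow> 'a::euclidean_space" and z0 :: 'a
  assumes orth: "\<And>i j. e i \<bullet> e j = (if i = j then 1 else 0)"
begin

definition lam :: "'i \<Rightarrow> 'a \<Rightarrow> real" where "lam i z = (z - z0) \<bullet> e i"
definition xi :: "'a \<Rightarrow> 'a" where "xi z = (\<Sum>k\<in>UNIV. lam k z *\<^sub>R e k)"
definition gam :: "'a \<Rightarrow> real \<Rightarrow> 'a" where "gam z t = z - (1 - t) *\<^sub>R xi z"

lemma lam_shift: "lam i (z + s *\<^sub>R e j) = lam i z + (if i = j then s else 0)"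
  unfolding lam_def by (simp add: inner_diff_left inner_add_left orth algebra_simps)

lemma xi_shift: "xi (z + s *\<^sub>R e j) = xi z + s *\<^sub>R e j"
proof -
  have "xi (z + s *\<^sub>R e j) = (\<Sum>k\<in>UNIV. lam k z *\<^sub>R e k + (if k = j then s *\<^sub>R e k else 0))"
    unfolding xi_def lam_shift by (intro sum.cong) (auto simp: scaleR_add_left)
  also have "\<dots> = xi z + s *\<^sub>R e j" unfolding xi_def sum.distrib by (simp add: if_distrib cong: if_cong)
  finally show ?thesis .
qed

lemma gam_shift: "gam (z + s *\<^sub>R e j) t = gam z t + (s * t) *\<^sub>R e j"
  unfolding gam_def xi_shift by (simp add: algebra_simps)

lemma gam_t: "gam z t = (z - xi z) + t *\<^sub>R xi z"
  unfolding gam_def by (simp add: algebra_simps)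

lemma gam_1: "gam z 1 = z" unfolding gam_def by simp

lemma smooth_lam: "smooth_fn (\<lambda>z. lam i z)"
proof -
  have "smooth_fn (\<lambda>z. z \<bullet> e i - z0 \<bullet> e i)" by (intro smooth_intros)
  then show ?thesis unfolding lam_def by (simp add: inner_diff_left)
qed

lemma smooth_lam_snd: "smooth_fn (\<lambda>p::real \<times> 'a. lam i (snd p))"
proof -
  have "smooth_fn (\<lambda>p::real \<times> 'a. snd p \<bullet> e i - z0 \<bullet> e i)" by (intro smooth_intros)
  then show ?thesis unfolding lam_def by (simp add: inner_diff_left)
qed

lemma smooth_gam_comp:
  assumes "smooth_fn h"
  shows "smooth_fn (\<lambda>p::real \<times> 'a. h (gam (snd p) (fst p)))"
proof (rule smooth_comp[OF assms], intro ballI)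
  fix b :: 'a
  have "smooth_fn (\<lambda>p::real \<times> 'a. snd p \<bullet> b - (1 - fst p) * (\<Sum>k\<in>UNIV. lam k (snd p) * (e k \<bullet> b)))"
    by (intro smooth_intros smooth_lam_snd) simp_all
  moreover have "\<And>p. gam (snd p) (fst p) \<bullet> b = snd p \<bullet> b - (1 - fst p) * (\<Sum>k\<in>UNIV. lam k (snd p) * (e k \<bullet> b))"
    unfolding gam_def xi_def by (simp add: inner_diff_left inner_sum_left)
  ultimately show "smooth_fn (\<lambda>p. gam (snd p) (fst p) \<bullet> b)" by simp
qed

lemma cont_gam: "continuous_on S (\<lambda>t. gam z t)"
  unfolding gam_def by (intro continuous_intros)

lemma lam_shift': "lam i (z + s *\<^sub>R e j) = lam i z + (if i = j then 1 else 0) * s"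
  by (simp add: lam_shift)

lemma poincare1:
  fixes \<beta> :: "'i \<Rightarrow> 'a \<Rightarrow> real"
  assumes sm: "\<And>i. smooth_fn (\<beta> i)" and cl: "\<And>i j z. pd (\<beta> i) (e j) z = pd (\<beta> j) (e i) z"
  defines "Q \<equiv> \<lambda>z. integral {0..1} (\<lambda>t. \<Sum>i\<in>UNIV. \<beta> i (gam z t) * lam i z)"
  shows "smooth_fn Q" and "pd Q (e j) z = \<beta> j z" and "(\<forall>i. lam i z = 0) \<Longrightarrow> Q z = 0"
proof -
  have sg: "smooth_fn (\<lambda>p::real \<times> 'a. \<Sum>i\<in>UNIV. \<beta> i (gam (snd p) (fst p)) * lam i (snd p))"
    by (intro smooth_intros smooth_gam_comp sm smooth_lam_snd) simp
  from smooth_integral[OF sg] show sQ: "smooth_fn Q" unfolding Q_def by simp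
  show "(\<forall>i. lam i z = 0) \<Longrightarrow> Q z = 0" unfolding Q_def by simp
  define d where "d = (\<lambda>i. if i = j then 1 else (0::real))"
  define h where "h = (\<lambda>s t. \<Sum>i\<in>UNIV. \<beta> i (gam z t + s *\<^sub>R (t *\<^sub>R e j)) * (lam i z + d i * s))"
  define hs where "hs = (\<lambda>s t. \<Sum>i\<in>UNIV. (t * pd (\<beta> i) (e j) (gam z t + s *\<^sub>R (t *\<^sub>R e j))) * (lam i z + d i * s)
                      + d i * \<beta> i (gam z t + s *\<^sub>R (t *\<^sub>R e j)))"
  have Qs: "Q (z + s *\<^sub>R e j) = integral {0..1} (h s)" for s
    unfolding Q_def h_def d_def gam_shift lam_shift' by (simp add: scaleR_scaleR)
  have dh: "((\<lambda>s. integral {0..1} (h s)) has_real_derivative integral {0..1} (hs 0)) (at 0)"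
  proof (rule leibniz1)
    fix s t
    show "((\<lambda>s. h s t) has_real_derivative hs s t) (at s)"
      unfolding h_def hs_def
    proof (intro DERIV_sum)
      fix i :: 'i
      have "((\<lambda>s. \<beta> i (gam z t + s *\<^sub>R (t *\<^sub>R e j)) * (lam i z + d i * s)) has_real_derivative
              pd (\<beta> i) (t *\<^sub>R e j) (gam z t + s *\<^sub>R (t *\<^sub>R e j)) * (lam i z + d i * s) + (0 + d i * 1) * \<beta> i (gam z t + s *\<^sub>R (t *\<^sub>R e j))) (at s)"
        by (intro DERIV_mult smooth_line_deriv sm DERIV_add DERIV_const DERIV_cmult DERIV_ident)
      then show "((\<lambda>s. \<beta> i (gam z t + s *\<^sub>R (t *\<^sub>R e j)) * (lam i z + d i * s)) has_real_derivative
              (t * pd (\<beta> i) (e j) (gam z t + s *\<^sub>R (t *\<^sub>R e j))) * (lam i z + d i * s)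
                      + d i * \<beta> i (gam z t + s *\<^sub>R (t *\<^sub>R e j))) (at s)"
        by (simp add: pd_scale[OF sm])
    qed
  next
    fix s show "continuous_on {0..1} (h s)"
      unfolding h_def gam_def by (intro continuous_intros cont_smooth_comp[OF sm])
  next
    show "continuous_on UNIV (\<lambda>(s, t). hs s t)"
      unfolding hs_def gam_def by (simp only: split_beta') (intro continuous_intros cont_smooth_comp[OF sm] cont_smooth_comp[OF smooth_pd[OF sm]])
  qed
  have hs0: "hs 0 t = t * pd (\<beta> j) (xi z) (gam z t) + \<beta> j (gam z t)" for t
  proof -
    have "hs 0 t = (\<Sum>i\<in>UNIV. t * (lam i z * pd (\<beta> j) (e i) (gam z t))) + (\<Sum>i\<in>UNIV. d i * \<beta> i (gam z t))"
      unfolding hs_def by (simp add: sum.distrib cl algebra_simps)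
    also have "(\<Sum>i\<in>UNIV. d i * \<beta> i (gam z t)) = \<beta> j (gam z t)"
    proof -
      have "\<And>i. d i * \<beta> i (gam z t) = (if j = i then \<beta> i (gam z t) else 0)" unfolding d_def by auto
      then show ?thesis by simp
    qed
    also have "(\<Sum>i\<in>UNIV. t * (lam i z * pd (\<beta> j) (e i) (gam z t))) = t * pd (\<beta> j) (xi z) (gam z t)"
      unfolding xi_def by (simp add: pd_sum[OF sm] pd_scale[OF sm] sum_distrib_left)
    finally show ?thesis .
  qed
  have ftc: "(hs 0 has_integral (1 * \<beta> j (gam z 1) - 0 * \<beta> j (gam z 0))) {0..1}"
  proof (rule fundamental_theorem_of_calculus)
    fix t :: real assume "t \<in> {0..1}"
    have "((\<lambda>t. \<beta> j ((z - xi z) + t *\<^sub>R xi z)) has_real_derivative pd (\<beta> j) (xi z) ((z - xi z) + t *\<^sub>R xi z)) (at t within {0..1})"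
      by (rule smooth_line_deriv[OF sm])
    then have "((\<lambda>t. t * \<beta> j (gam z t)) has_real_derivative 1 * \<beta> j (gam z t) + pd (\<beta> j) (xi z) (gam z t) * t) (at t within {0..1})"
      unfolding gam_t by (intro DERIV_mult DERIV_ident)
    then show "((\<lambda>t. t * \<beta> j (gam z t)) has_vector_derivative hs 0 t) (at t within {0..1})"
      by (simp add: hs0 has_real_derivative_iff_has_vector_derivative[symmetric] algebra_simps)
  qed simp
  have "integral {0..1} (hs 0) = \<beta> j z" using integral_unique[OF ftc] by (simp add: gam_1)
  then have "((\<lambda>s. Q (z + s *\<^sub>R e j)) has_real_derivative \<beta> j z) (at 0)"
    using dh by (simp add: Qs)
  then show "pd Q (e j) z = \<beta> j z" by (rule DERIV_line_unique[OF sQ])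
qed

lemma smooth_fst_pow: "smooth_fn (\<lambda>p::real \<times> 'a. fst p ^ n)"
  by (induction n) (simp_all add: smooth_const smooth_mult smooth_fst)

lemma pd_Qn:
  fixes \<beta> :: "'i \<Rightarrow> 'a \<Rightarrow> real" and n :: nat
  assumes sm: "\<And>i. smooth_fn (\<beta> i)"
  defines "Q \<equiv> \<lambda>z. integral {0..1} (\<lambda>t. t ^ n * (\<Sum>i\<in>UNIV. \<beta> i (gam z t) * lam i z))"
  shows "smooth_fn Q" and "pd Q (e j) z = integral {0..1} (\<lambda>t. t ^ n * (t * (\<Sum>i\<in>UNIV. lam i z * pd (\<beta> i) (e j) (gam z t)) + \<beta> j (gam z t)))"
proof -
  have sg: "smooth_fn (\<lambda>p::real \<times> 'a. fst p ^ n * (\<Sum>i\<in>UNIV. \<beta> i (gam (snd p) (fst p)) * lam i (snd p)))"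
    by (intro smooth_intros smooth_gam_comp sm smooth_lam_snd smooth_fst_pow) simp
  from smooth_integral[OF sg] show sQ: "smooth_fn Q" unfolding Q_def by simp
  define d where "d = (\<lambda>i. if i = j then 1 else (0::real))"
  define h where "h = (\<lambda>s t. t ^ n * (\<Sum>i\<in>UNIV. \<beta> i (gam z t + s *\<^sub>R (t *\<^sub>R e j)) * (lam i z + d i * s)))"
  define hs where "hs = (\<lambda>s t. t ^ n * (\<Sum>i\<in>UNIV. (t * pd (\<beta> i) (e j) (gam z t + s *\<^sub>R (t *\<^sub>R e j))) * (lam i z + d i * s)
                      + d i * \<beta> i (gam z t + s *\<^sub>R (t *\<^sub>R e j))))"
  have Qs: "Q (z + s *\<^sub>R e j) = integral {0..1} (h s)" for s
    unfolding Q_def h_def d_def gam_shift lam_shift' by (simp add: scaleR_scaleR)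
  have dh: "((\<lambda>s. integral {0..1} (h s)) has_real_derivative integral {0..1} (hs 0)) (at 0)"
  proof (rule leibniz1)
    fix s t
    show "((\<lambda>s. h s t) has_real_derivative hs s t) (at s)"
      unfolding h_def hs_def
    proof (intro DERIV_cmult DERIV_sum)
      fix i :: 'i
      have "((\<lambda>s. \<beta> i (gam z t + s *\<^sub>R (t *\<^sub>R e j)) * (lam i z + d i * s)) has_real_derivative
              pd (\<beta> i) (t *\<^sub>R e j) (gam z t + s *\<^sub>R (t *\<^sub>R e j)) * (lam i z + d i * s) + (0 + d i * 1) * \<beta> i (gam z t + s *\<^sub>R (t *\<^sub>R e j))) (at s)"
        by (intro DERIV_mult smooth_line_deriv sm DERIV_add DERIV_const DERIV_cmult DERIV_ident)
      then show "((\<lambda>s. \<beta> i (gam z t + s *\<^sub>R (t *\<^sub>R e j)) * (lam i z + d i * s)) has_real_derivative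
              (t * pd (\<beta> i) (e j) (gam z t + s *\<^sub>R (t *\<^sub>R e j))) * (lam i z + d i * s)
                      + d i * \<beta> i (gam z t + s *\<^sub>R (t *\<^sub>R e j))) (at s)"
        by (simp add: pd_scale[OF sm])
    qed
  next
    fix s show "continuous_on {0..1} (h s)"
      unfolding h_def gam_def by (intro continuous_intros cont_smooth_comp[OF sm])
  next
    show "continuous_on UNIV (\<lambda>(s, t). hs s t)"
      unfolding hs_def gam_def by (simp only: split_beta') (intro continuous_intros cont_smooth_comp[OF sm] cont_smooth_comp[OF smooth_pd[OF sm]])
  qed
  have hs0: "hs 0 t = t ^ n * (t * (\<Sum>i\<in>UNIV. lam i z * pd (\<beta> i) (e j) (gam z t)) + \<beta> j (gam z t))" for t
  proof -
    have "hs 0 t = t ^ n * ((\<Sum>i\<in>UNIV. t * (lam i z * pd (\<beta> i) (e j) (gam z t))) + (\<Sum>i\<in>UNIV. d i * \<beta> i (gam z t)))"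
      unfolding hs_def by (simp add: sum.distrib algebra_simps)
    also have "(\<Sum>i\<in>UNIV. d i * \<beta> i (gam z t)) = \<beta> j (gam z t)"
    proof -
      have "\<And>i. d i * \<beta> i (gam z t) = (if j = i then \<beta> i (gam z t) else 0)" unfolding d_def by auto
      then show ?thesis by simp
    qed
    finally show ?thesis by (simp add: sum_distrib_left)
  qed
  show "pd Q (e j) z = integral {0..1} (\<lambda>t. t ^ n * (t * (\<Sum>i\<in>UNIV. lam i z * pd (\<beta> i) (e j) (gam z t)) + \<beta> j (gam z t)))"
    using dh unfolding Qs[symmetric] hs0 by (rule DERIV_line_unique[OF sQ])
qed

lemma pd_uminus: "smooth_fn f \<Longrightarrow> pd (\<lambda>z. - f z) v z = - pd f v z"
  by (intro pd_eq_has_derivative has_derivative_minus smooth_has_derivative)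

lemma poincare2:
  fixes \<omega> :: "'i \<Rightarrow> 'i \<Rightarrow> 'a \<Rightarrow> real"
  assumes sm: "\<And>i j. smooth_fn (\<omega> i j)" and anti: "\<And>i j z. \<omega> i j z = - \<omega> j i z"
    and cl: "\<And>j j' k z. pd (\<omega> j j') (e k) z + pd (\<omega> j' k) (e j) z + pd (\<omega> k j) (e j') z = 0"
  defines "A \<equiv> \<lambda>j' z. integral {0..1} (\<lambda>t. t ^ 1 * (\<Sum>k\<in>UNIV. \<omega> k j' (gam z t) * lam k z))"
  shows "smooth_fn (A j')" and "pd (A j') (e j) z - pd (A j) (e j') z = \<omega> j j' z"
proof -
  show "smooth_fn (A j')" unfolding A_def by (rule pd_Qn(1)[OF sm])
  have a1: "pd (A j') (e j) z = integral {0..1} (\<lambda>t. t ^ 1 * (t * (\<Sum>k\<in>UNIV. lam k z * pd (\<omega> k j') (e j) (gam z t)) + \<omega> j j' (gam z t)))"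
    unfolding A_def by (rule pd_Qn(2)[OF sm])
  have a2: "pd (A j) (e j') z = integral {0..1} (\<lambda>t. t ^ 1 * (t * (\<Sum>k\<in>UNIV. lam k z * pd (\<omega> k j) (e j') (gam z t)) + \<omega> j' j (gam z t)))"
    unfolding A_def by (rule pd_Qn(2)[OF sm])
  have antif: "\<omega> j' k = (\<lambda>z. - \<omega> k j' z)" for j' k by (intro ext) (rule anti)
  have clo: "pd (\<omega> k j') (e j) y - pd (\<omega> k j) (e j') y = pd (\<omega> j j') (e k) y" for k y
  proof -
    have "pd (\<omega> j' k) (e j) y = - pd (\<omega> k j') (e j) y"
      by (subst antif) (rule pd_uminus[OF sm])
    then show ?thesis using cl[of j j' k y] by simp
  qed
  define F where "F = (\<lambda>t. t * t * (\<Sum>k\<in>UNIV. lam k z * pd (\<omega> j j') (e k) (gam z t)) + 2 * t * \<omega> j j' (gam z t))"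
  have int1: "(\<lambda>t. t ^ 1 * (t * (\<Sum>k\<in>UNIV. lam k z * pd (\<omega> k j') (e j) (gam z t)) + \<omega> j j' (gam z t))) integrable_on {0..1}"
    unfolding gam_def
    by (intro integrable_continuous_interval continuous_intros cont_smooth_comp[OF sm] cont_smooth_comp[OF smooth_pd[OF sm]])
  have int2: "(\<lambda>t. t ^ 1 * (t * (\<Sum>k\<in>UNIV. lam k z * pd (\<omega> k j) (e j') (gam z t)) + \<omega> j' j (gam z t))) integrable_on {0..1}"
    unfolding gam_def
    by (intro integrable_continuous_interval continuous_intros cont_smooth_comp[OF sm] cont_smooth_comp[OF smooth_pd[OF sm]])
  have "pd (A j') (e j) z - pd (A j) (e j') z = integral {0..1} (\<lambda>t.
       t ^ 1 * (t * (\<Sum>k\<in>UNIV. lam k z * pd (\<omega> k j') (e j) (gam z t)) + \<omega> j j' (gam z t)) -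
       t ^ 1 * (t * (\<Sum>k\<in>UNIV. lam k z * pd (\<omega> k j) (e j') (gam z t)) + \<omega> j' j (gam z t)))"
    unfolding a1 a2 by (rule integral_diff[OF int1 int2, symmetric])
  also have "\<dots> = integral {0..1} F"
  proof (rule integral_cong)
    fix t :: real
    have "(\<Sum>k\<in>UNIV. lam k z * pd (\<omega> k j') (e j) (gam z t)) - (\<Sum>k\<in>UNIV. lam k z * pd (\<omega> k j) (e j') (gam z t))
          = (\<Sum>k\<in>UNIV. lam k z * pd (\<omega> j j') (e k) (gam z t))"
      unfolding sum_subtractf[symmetric]
    proof (intro sum.cong refl)
      fix k :: 'i
      have "pd (\<omega> k j') (e j) (gam z t) - pd (\<omega> k j) (e j') (gam z t) = pd (\<omega> j j') (e k) (gam z t)" by (rule clo)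
      then show "lam k z * pd (\<omega> k j') (e j) (gam z t) - lam k z * pd (\<omega> k j) (e j') (gam z t) = lam k z * pd (\<omega> j j') (e k) (gam z t)"
        by (simp add: right_diff_distrib[symmetric])
    qed
    moreover have "\<omega> j' j (gam z t) = - \<omega> j j' (gam z t)" by (rule anti)
    ultimately show "t ^ 1 * (t * (\<Sum>k\<in>UNIV. lam k z * pd (\<omega> k j') (e j) (gam z t)) + \<omega> j j' (gam z t)) -
       t ^ 1 * (t * (\<Sum>k\<in>UNIV. lam k z * pd (\<omega> k j) (e j') (gam z t)) + \<omega> j' j (gam z t)) = F t"
      unfolding F_def by (simp add: algebra_simps)
  qed
  also have "\<dots> = \<omega> j j' z"
  proof -
    have "(F has_integral (1 * 1 * \<omega> j j' (gam z 1) - 0 * 0 * \<omega> j j' (gam z 0))) {0..1}"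
    proof (rule fundamental_theorem_of_calculus)
      fix t :: real assume "t \<in> {0..1}"
      have "((\<lambda>t. \<omega> j j' ((z - xi z) + t *\<^sub>R xi z)) has_real_derivative pd (\<omega> j j') (xi z) ((z - xi z) + t *\<^sub>R xi z)) (at t within {0..1})"
        by (rule smooth_line_deriv[OF sm])
      then have "((\<lambda>t. t * t * \<omega> j j' (gam z t)) has_real_derivative (1 * t + 1 * t) * \<omega> j j' (gam z t) + pd (\<omega> j j') (xi z) (gam z t) * (t * t)) (at t within {0..1})"
        unfolding gam_t by (intro DERIV_mult DERIV_ident)
      moreover have "pd (\<omega> j j') (xi z) (gam z t) = (\<Sum>k\<in>UNIV. lam k z * pd (\<omega> j j') (e k) (gam z t))"
        unfolding xi_def by (simp add: pd_sum[OF sm] pd_scale[OF sm])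
      ultimately show "((\<lambda>t. t * t * \<omega> j j' (gam z t)) has_vector_derivative F t) (at t within {0..1})"
        unfolding F_def by (simp add: has_real_derivative_iff_has_vector_derivative[symmetric] algebra_simps)
    qed simp
    then show ?thesis by (simp add: integral_unique gam_1)
  qed
  finally show "pd (A j') (e j) z - pd (A j) (e j') z = \<omega> j j' z" .
qed

end


lemma smooth_line_deriv_shift:
  assumes "smooth_fn f"
  shows "((\<lambda>t. f (z + (t - a) *\<^sub>R v)) has_real_derivative pd f v (z + (t - a) *\<^sub>R v)) (at t)"
proof -
  have "((\<lambda>t. z + (t - a) *\<^sub>R v) has_derivative (\<lambda>h. h *\<^sub>R v)) (at t)"
    by (auto intro!: derivative_eq_intros)
  from has_derivative_compose[OF this smooth_has_derivative[OF assms]]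
  have "((\<lambda>t. f (z + (t - a) *\<^sub>R v)) has_derivative (\<lambda>h. pd f (h *\<^sub>R v) (z + (t - a) *\<^sub>R v))) (at t)"
    by (simp add: o_def)
  then show ?thesis
    by (simp add: has_field_derivative_def pd_scale[OF assms] mult.commute[of _ "pd f v _"])
qed

lemma deriv_line:
  assumes "smooth_fn f"
  shows "deriv (\<lambda>t. f (z + (t - a) *\<^sub>R v)) a = pd f v z"
  using DERIV_imp_deriv[OF smooth_line_deriv_shift[OF assms, of z a v a]] by simp

lemma smooth_comp_affine:
  assumes "smooth_fn h" "linear L"
  shows "smooth_fn (\<lambda>z. h (L z + b))"
proof (rule smooth_comp[OF assms(1)], intro ballI)
  fix i :: 'a
  have "linear (\<lambda>z. L z \<bullet> i)" using assms(2) by (simp add: linear_iff inner_add_left)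
  from smooth_affine[OF this, of "b \<bullet> i"] show "smooth_fn (\<lambda>z. (L z + b) \<bullet> i)" by (simp add: inner_add_left)
qed

lemma pd_comp_affine:
  assumes "smooth_fn h" "linear L"
  shows "pd (\<lambda>z. h (L z + b)) v z = pd h (L v) (L z + b)"
proof -
  have "((\<lambda>z. L z + b) has_derivative L) (at z)"
    using assms(2) by (auto intro!: has_derivative_add_const bounded_linear_imp_has_derivative simp: linear_conv_bounded_linear)
  from has_derivative_compose[OF this smooth_has_derivative[OF assms(1)]]
  show ?thesis by (rule pd_eq_has_derivative[unfolded o_def])
qed

type_synonym 'm pt3 = "real \<times> (real^'m) \<times> (real^'m)"
type_synonym 'm pt2 = "real \<times> (real^'m)"

definition U3 :: "'m::finite fn3 \<Rightarrow> 'm pt3 \<Rightarrow> real" where "U3 g = (\<lambda>(x, w, p). g x w p)"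
definition U2 :: "'m::finite fn2 \<Rightarrow> 'm pt2 \<Rightarrow> real" where "U2 g = (\<lambda>(x, w). g x w)"

lemma U3_apply[simp]: "U3 g (x, w, p) = g x w p" by (simp add: U3_def)
lemma U2_apply[simp]: "U2 g (x, w) = g x w" by (simp add: U2_def)

lemma smooth3_U3: "smooth3 g \<longleftrightarrow> smooth_fn (U3 g)" by (simp add: smooth3_def U3_def)
lemma smooth2_U2: "smooth2 g \<longleftrightarrow> smooth_fn (U2 g)" by (simp add: smooth2_def U2_def)

definition Dd :: "'m::finite pt3 \<Rightarrow> 'm fn3 \<Rightarrow> 'm fn3" where "Dd e g = (\<lambda>x w p. pd (U3 g) e (x, w, p))"
definition Dd2 :: "'m::finite pt2 \<Rightarrow> 'm fn2 \<Rightarrow> 'm fn2" where "Dd2 e g = (\<lambda>x w. pd (U2 g) e (x, w))"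

lemma U3_Dd: "U3 (Dd e g) = pd (U3 g) e" by (simp add: U3_def Dd_def)
lemma U2_Dd2: "U2 (Dd2 e g) = pd (U2 g) e" by (simp add: U2_def Dd2_def)

lemma smooth3_Dd: "smooth3 g \<Longrightarrow> smooth3 (Dd e g)"
  by (simp add: smooth3_U3 U3_Dd smooth_pd)
lemma smooth2_Dd2: "smooth2 g \<Longrightarrow> smooth2 (Dd2 e g)"
  by (simp add: smooth2_U2 U2_Dd2 smooth_pd)

definition eX :: "'m::finite pt3" where "eX = (1, 0, 0)"
definition eW :: "'m::finite \<Rightarrow> 'm pt3" where "eW k = (0, axis k 1, 0)"
definition eP :: "'m::finite \<Rightarrow> 'm pt3" where "eP k = (0, 0, axis k 1)"
definition eX2 :: "'m::finite pt2" where "eX2 = (1, 0)"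
definition eW2 :: "'m::finite \<Rightarrow> 'm pt2" where "eW2 k = (0, axis k 1)"

lemma vupd_eq: "vupd w k t = w + (t - w $ k) *\<^sub>R axis k 1"
  by (simp add: vupd_def vec_eq_iff axis_def)

lemma Dp_Dd: assumes "smooth3 g" shows "Dp k g = Dd (eP k) g"
proof (intro ext)
  fix x w p
  have "(\<lambda>t. g x w (vupd p k t)) = (\<lambda>t. U3 g ((x, w, p) + (t - p $ k) *\<^sub>R eP k))"
    by (simp add: vupd_eq eP_def)
  then show "Dp k g x w p = Dd (eP k) g x w p"
    unfolding Dp_def Dd_def using deriv_line[OF assms[unfolded smooth3_U3]] by simp
qed

lemma Dw_Dd: assumes "smooth3 g" shows "Dw k g = Dd (eW k) g"
proof (intro ext)
  fix x w p
  have "(\<lambda>t. g x (vupd w k t) p) = (\<lambda>t. U3 g ((x, w, p) + (t - w $ k) *\<^sub>R eW k))"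
    by (simp add: vupd_eq eW_def)
  then show "Dw k g x w p = Dd (eW k) g x w p"
    unfolding Dw_def Dd_def using deriv_line[OF assms[unfolded smooth3_U3]] by simp
qed

lemma Dx_Dd: assumes "smooth3 g" shows "Dx g = Dd eX g"
proof (intro ext)
  fix x w p
  have "(\<lambda>t. g t w p) = (\<lambda>t. U3 g ((x, w, p) + (t - x) *\<^sub>R eX))"
    by (simp add: eX_def)
  then show "Dx g x w p = Dd eX g x w p"
    unfolding Dx_def Dd_def using deriv_line[OF assms[unfolded smooth3_U3]] by simp
qed

lemma Dw2_Dd2: assumes "smooth2 g" shows "Dw2 k g = Dd2 (eW2 k) g"
proof (intro ext)
  fix x w
  have "(\<lambda>t. g x (vupd w k t)) = (\<lambda>t. U2 g ((x, w) + (t - w $ k) *\<^sub>R eW2 k))"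
    by (simp add: vupd_eq eW2_def)
  then show "Dw2 k g x w = Dd2 (eW2 k) g x w"
    unfolding Dw2_def Dd2_def using deriv_line[OF assms[unfolded smooth2_U2]] by simp
qed

lemma Dx2_Dd2: assumes "smooth2 g" shows "Dx2 g = Dd2 eX2 g"
proof (intro ext)
  fix x w
  have "(\<lambda>t. g t w) = (\<lambda>t. U2 g ((x, w) + (t - x) *\<^sub>R eX2))"
    by (simp add: eX2_def)
  then show "Dx2 g x w = Dd2 eX2 g x w"
    unfolding Dx2_def Dd2_def using deriv_line[OF assms[unfolded smooth2_U2]] by simp
qed

lemma Dd_apply: "Dd e g x w p = pd (U3 g) e (x, w, p)" by (simp add: Dd_def)
lemma Dd2_apply: "Dd2 e g x w = pd (U2 g) e (x, w)" by (simp add: Dd2_def)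

lemma Dd_comm: assumes "smooth3 g" shows "Dd a (Dd b g) = Dd b (Dd a g)"
proof (intro ext)
  fix x w p
  have "Dd a (Dd b g) x w p = pd (pd (U3 g) b) a (x, w, p)" by (simp only: Dd_apply[of a] U3_Dd)
  also have "\<dots> = pd (pd (U3 g) a) b (x, w, p)" using pd_symmetric[OF assms[unfolded smooth3_U3]] by simp
  also have "\<dots> = Dd b (Dd a g) x w p" by (simp only: Dd_apply[of b] U3_Dd)
  finally show "Dd a (Dd b g) x w p = Dd b (Dd a g) x w p" .
qed

lemma Dd2_comm: assumes "smooth2 g" shows "Dd2 a (Dd2 b g) = Dd2 b (Dd2 a g)"
proof (intro ext)
  fix x w
  have "Dd2 a (Dd2 b g) x w = pd (pd (U2 g) b) a (x, w)" by (simp only: Dd2_apply[of a] U2_Dd2)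
  also have "\<dots> = pd (pd (U2 g) a) b (x, w)" using pd_symmetric[OF assms[unfolded smooth2_U2]] by simp
  also have "\<dots> = Dd2 b (Dd2 a g) x w" by (simp only: Dd2_apply[of b] U2_Dd2)
  finally show "Dd2 a (Dd2 b g) x w = Dd2 b (Dd2 a g) x w" .
qed

lemma Dd_linear_dir: assumes "smooth3 g"
  shows "Dd (a + b) g x w p = Dd a g x w p + Dd b g x w p" and "Dd (r *\<^sub>R a) g x w p = r * Dd a g x w p"
  unfolding Dd_def using pd_add[OF assms[unfolded smooth3_U3]] pd_scale[OF assms[unfolded smooth3_U3]] by simp_all


lemma pd_add_fun: "smooth_fn f \<Longrightarrow> smooth_fn g \<Longrightarrow> pd (\<lambda>z. f z + g z) v z = pd f v z + pd g v z"
  by (intro pd_eq_has_derivative has_derivative_add smooth_has_derivative)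
lemma pd_diff_fun: "smooth_fn f \<Longrightarrow> smooth_fn g \<Longrightarrow> pd (\<lambda>z. f z - g z) v z = pd f v z - pd g v z"
  by (intro pd_eq_has_derivative has_derivative_diff smooth_has_derivative)
lemma pd_mult_fun: "smooth_fn f \<Longrightarrow> smooth_fn g \<Longrightarrow> pd (\<lambda>z. f z * g z) v z = pd f v z * g z + f z * pd g v z"
proof -
  assume a: "smooth_fn f" "smooth_fn g"
  have "pd (\<lambda>z. f z * g z) v z = f z * pd g v z + pd f v z * g z"
    by (intro pd_eq_has_derivative has_derivative_mult smooth_has_derivative a)
  then show ?thesis by simp
qed
lemma pd_sum_fun: "finite S \<Longrightarrow> (\<And>i. i \<in> S \<Longrightarrow> smooth_fn (f i)) \<Longrightarrow> pd (\<lambda>z. \<Sum>i\<in>S. f i z) v z = (\<Sum>i\<in>S. pd (f i) v z)"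
proof -
  assume a: "finite S" "\<And>i. i \<in> S \<Longrightarrow> smooth_fn (f i)"
  have "((\<lambda>z. \<Sum>i\<in>S. f i z) has_derivative (\<lambda>v. \<Sum>i\<in>S. pd (f i) v z)) (at z)"
    by (intro has_derivative_sum smooth_has_derivative a)
  then show ?thesis by (rule pd_eq_has_derivative)
qed
lemma pd_const_fun: "pd (\<lambda>z. k) v z = 0"
  by (intro pd_eq_has_derivative[of _ "\<lambda>v. 0", simplified] has_derivative_const)
lemma pd_inner_fun: "pd (\<lambda>z. z \<bullet> b) v z = v \<bullet> b"
  by (intro pd_eq_has_derivative[of _ "\<lambda>v. v \<bullet> b", simplified] bounded_linear_imp_has_derivative bounded_linear_inner_left)

lemma U3_add: "U3 (\<lambda>x w p. a x w p + b x w p) = (\<lambda>z. U3 a z + U3 b z)" by (auto simp: U3_def)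
lemma U3_diff: "U3 (\<lambda>x w p. a x w p - b x w p) = (\<lambda>z. U3 a z - U3 b z)" by (auto simp: U3_def)
lemma U3_mult: "U3 (\<lambda>x w p. a x w p * b x w p) = (\<lambda>z. U3 a z * U3 b z)" by (auto simp: U3_def)
lemma U3_sum: "U3 (\<lambda>x w p. \<Sum>i\<in>S. a i x w p) = (\<lambda>z. \<Sum>i\<in>S. U3 (a i) z)" by (auto simp: U3_def)
lemma U3_const: "U3 (\<lambda>x w p. k) = (\<lambda>z. k)" by (auto simp: U3_def)
lemma U3_pc: "U3 (\<lambda>x w p. p $ k) = (\<lambda>z. z \<bullet> eP k)" by (auto simp: U3_def eP_def inner_axis)
lemma U3_wc: "U3 (\<lambda>x w p. w $ k) = (\<lambda>z. z \<bullet> eW k)" by (auto simp: U3_def eW_def inner_axis)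
lemma U3_xc: "U3 (\<lambda>x w p. x) = (\<lambda>z. z \<bullet> eX)" by (auto simp: U3_def eX_def)

definition Lc :: "'m::finite pt3 \<Rightarrow> 'm pt3" where "Lc z = (fst z, fst (snd z), 0)"
lemma linear_Lc: "linear Lc" unfolding Lc_def by (auto simp: linear_iff)
lemma U3_evc: "U3 (\<lambda>x w p. f x w c) = (\<lambda>z. U3 f (Lc z + (0, 0, c)))" by (auto simp: U3_def Lc_def)

definition Lp :: "'m::finite pt3 \<Rightarrow> 'm pt2" where "Lp z = (fst z, fst (snd z))"
lemma linear_Lp: "linear Lp" unfolding Lp_def by (auto simp: linear_iff)
lemma U3_lift: "U3 (\<lambda>x w p. a x w) = (\<lambda>z. U2 a (Lp z + 0))" by (auto simp: U3_def Lp_def)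

definition Le :: "'m::finite pt2 \<Rightarrow> 'm pt3" where "Le z = (fst z, snd z, 0)"
lemma linear_Le: "linear Le" unfolding Le_def by (auto simp: linear_iff)
lemma U2_evc: "U2 (\<lambda>x w. f x w c) = (\<lambda>z. U3 f (Le z + (0, 0, c)))" by (auto simp: U2_def Le_def)

lemma smooth3_add[simp]: "smooth3 a \<Longrightarrow> smooth3 b \<Longrightarrow> smooth3 (\<lambda>x w p. a x w p + b x w p)"
  unfolding smooth3_U3 U3_add by (rule smooth_add)
lemma smooth3_diff[simp]: "smooth3 a \<Longrightarrow> smooth3 b \<Longrightarrow> smooth3 (\<lambda>x w p. a x w p - b x w p)"
  unfolding smooth3_U3 U3_diff by (rule smooth_diff)
lemma smooth3_mult[simp]: "smooth3 a \<Longrightarrow> smooth3 b \<Longrightarrow> smooth3 (\<lambda>x w p. a x w p * b x w p)"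
  unfolding smooth3_U3 U3_mult by (rule smooth_mult)
lemma smooth3_sum[simp]: "finite S \<Longrightarrow> (\<And>i. i \<in> S \<Longrightarrow> smooth3 (a i)) \<Longrightarrow> smooth3 (\<lambda>x w p. \<Sum>i\<in>S. a i x w p)"
  unfolding smooth3_U3 U3_sum by (rule smooth_sum)
lemma smooth3_const[simp]: "smooth3 (\<lambda>x w p. k)"
  unfolding smooth3_U3 U3_const by (rule smooth_const)
lemma smooth3_pc[simp]: "smooth3 (\<lambda>x w p. p $ k)"
  unfolding smooth3_U3 U3_pc by (rule smooth_inner)
lemma smooth3_wc[simp]: "smooth3 (\<lambda>x w p. w $ k)"
  unfolding smooth3_U3 U3_wc by (rule smooth_inner)
lemma smooth3_evc[simp]: "smooth3 f \<Longrightarrow> smooth3 (\<lambda>x w p. f x w c)"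
  unfolding smooth3_U3 U3_evc by (rule smooth_comp_affine[OF _ linear_Lc])
lemma smooth3_lift[simp]: "smooth2 a \<Longrightarrow> smooth3 (\<lambda>x w p. a x w)"
  unfolding smooth3_U3 smooth2_U2 U3_lift by (rule smooth_comp_affine[OF _ linear_Lp])
lemma smooth2_evc[simp]: "smooth3 f \<Longrightarrow> smooth2 (\<lambda>x w. f x w c)"
  unfolding smooth3_U3 smooth2_U2 U2_evc by (rule smooth_comp_affine[OF _ linear_Le])
lemma smooth3_Dd'[simp]: "smooth3 g \<Longrightarrow> smooth3 (Dd e g)" by (rule smooth3_Dd)
lemma smooth3_Dp[simp]: "smooth3 g \<Longrightarrow> smooth3 (Dp k g)" by (simp add: Dp_Dd)
lemma smooth3_Dw[simp]: "smooth3 g \<Longrightarrow> smooth3 (Dw k g)" by (simp add: Dw_Dd)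
lemma smooth3_Dx[simp]: "smooth3 g \<Longrightarrow> smooth3 (Dx g)" by (simp add: Dx_Dd)

lemma Dd_add[simp]: "smooth3 a \<Longrightarrow> smooth3 b \<Longrightarrow> Dd e (\<lambda>x w p. a x w p + b x w p) = (\<lambda>x w p. Dd e a x w p + Dd e b x w p)"
  unfolding smooth3_U3 Dd_def U3_add by (simp add: pd_add_fun)
lemma Dd_diff[simp]: "smooth3 a \<Longrightarrow> smooth3 b \<Longrightarrow> Dd e (\<lambda>x w p. a x w p - b x w p) = (\<lambda>x w p. Dd e a x w p - Dd e b x w p)"
  unfolding smooth3_U3 Dd_def U3_diff by (simp add: pd_diff_fun)
lemma Dd_mult[simp]: "smooth3 a \<Longrightarrow> smooth3 b \<Longrightarrow> Dd e (\<lambda>x w p. a x w p * b x w p) = (\<lambda>x w p. Dd e a x w p * b x w p + a x w p * Dd e b x w p)"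
  unfolding smooth3_U3 Dd_def U3_mult by (simp add: pd_mult_fun)
lemma Dd_sum[simp]: "finite S \<Longrightarrow> (\<And>i. i \<in> S \<Longrightarrow> smooth3 (a i)) \<Longrightarrow> Dd e (\<lambda>x w p. \<Sum>i\<in>S. a i x w p) = (\<lambda>x w p. \<Sum>i\<in>S. Dd e (a i) x w p)"
  unfolding smooth3_U3 Dd_def U3_sum by (simp add: pd_sum_fun)
lemma Dd_const[simp]: "Dd e (\<lambda>x w p. k) = (\<lambda>x w p. 0)"
  unfolding Dd_def U3_const by (simp add: pd_const_fun)
lemma Dd_pc[simp]: "Dd e (\<lambda>x w p. p $ k) = (\<lambda>x w p. snd (snd e) $ k)"
  unfolding Dd_def U3_pc by (cases e) (simp add: pd_inner_fun eP_def inner_axis inner_Pair)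
lemma Dd_evc: "smooth3 f \<Longrightarrow> Dd e (\<lambda>x w p. f x w c) = (\<lambda>x w p. Dd (Lc e) f x w c)"
  unfolding smooth3_U3 Dd_def U3_evc by (simp only: pd_comp_affine[OF _ linear_Lc]) (simp add: Lc_def)
lemma Dd_lift: "smooth2 a \<Longrightarrow> Dd e (\<lambda>x w p. a x w) = (\<lambda>x w p. Dd2 (Lp e) a x w)"
  unfolding smooth2_U2 Dd_def Dd2_def U3_lift by (simp only: pd_comp_affine[OF _ linear_Lp]) (simp add: Lp_def)

lemma Lc_simps[simp]: "Lc eX = eX" "Lc (eW k) = eW k" "Lc (eP k) = 0"
  by (simp_all add: Lc_def eX_def eW_def eP_def zero_prod_def)
lemma Lp_simps[simp]: "Lp eX = eX2" "Lp (eW k) = eW2 k" "Lp (eP k) = 0"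
  by (simp_all add: Lp_def eX_def eW_def eP_def eX2_def eW2_def zero_prod_def)
lemma e_snd_simps[simp]: "snd (snd (eX::'m::finite pt3)) = 0" "snd (snd (eW k)) = 0" "snd (snd (eP k)) = axis k 1"
  by (simp_all add: eX_def eW_def eP_def)

lemma Dd_zero[simp]: "smooth3 g \<Longrightarrow> Dd 0 g = (\<lambda>x w p. 0)"
  unfolding smooth3_U3 Dd_def by (simp add: pd_zero)


lemma vsum_axis: "(\<Sum>k\<in>UNIV. (v::real^'m::finite) $ k *\<^sub>R axis k 1) = v"
  by (simp add: vec_eq_iff axis_def if_distrib cong: if_cong)

lemma triple_sum: "finite S \<Longrightarrow> ((0::real), (0::real^'m), (\<Sum>k\<in>S. f k)) = (\<Sum>k\<in>S. ((0::real), (0::real^'m::finite), f k))"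
  by (simp add: prod_eq_iff fst_sum snd_sum)

lemma eP_expand: "((0::real), (0::real^'m::finite), q) = (\<Sum>k\<in>UNIV. q $ k *\<^sub>R eP k)"
proof -
  have "((0::real), (0::real^'m), q) = ((0::real), (0::real^'m), \<Sum>k\<in>UNIV. q $ k *\<^sub>R axis k 1)" by (simp add: vsum_axis)
  also have "\<dots> = (\<Sum>k\<in>UNIV. ((0::real), (0::real^'m), q $ k *\<^sub>R axis k 1))" by (rule triple_sum) simp
  also have "\<dots> = (\<Sum>k\<in>UNIV. q $ k *\<^sub>R eP k)" by (simp add: eP_def)
  finally show ?thesis .
qed

lemma const_p:
  assumes h: "smooth3 h" and d: "\<And>k x w p. Dd (eP k) h x w p = 0"
  shows "h x w p = h x w c"
proof -
  have sh: "smooth_fn (U3 h)" using h by (simp add: smooth3_U3)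
  define z0 where "z0 = (x, w, c)"
  define v where "v = ((0::real), (0::real^'a), p - c)"
  have pd0: "pd (U3 h) v z = 0" for z
  proof -
    obtain a b q where z: "z = (a, b, q)" by (cases z) auto
    have "pd (U3 h) v z = (\<Sum>k\<in>UNIV. (p - c) $ k * pd (U3 h) (eP k) z)"
      unfolding v_def eP_expand by (simp add: pd_sum[OF sh] pd_scale[OF sh])
    also have "\<dots> = 0" using d[unfolded Dd_def] z by simp
    finally show ?thesis .
  qed
  have "\<forall>t. ((\<lambda>t. U3 h (z0 + t *\<^sub>R v)) has_real_derivative 0) (at t)"
    using smooth_line_deriv[OF sh, of z0 v] pd0 by simp
  from DERIV_isconst_all[OF this, of 1 0] show ?thesis by (simp add: z0_def v_def)
qed

lemma Dd_evc_zero: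
  assumes "smooth3 g" "\<And>x w. g x w c = 0"
  shows "Dd (Lc e) g x w c = 0"
proof -
  have "Dd (Lc e) g x w c = Dd e (\<lambda>x w p. g x w c) x w c" using Dd_evc[OF assms(1)] by simp
  also have "(\<lambda>x w p. g x w c) = (\<lambda>x w p. 0)" using assms(2) by simp
  finally show ?thesis by simp
qed


lemma axis_comp[simp]: "axis k (1::real) $ j = (if j = k then 1 else 0)"
  by (simp add: axis_def)

lemma mult_delta_simps[simp]: "(x::real) * (if P then 1 else 0) = (if P then x else 0)"
  "(if P then 1 else 0) * (x::real) = (if P then x else 0)"
  by simp_all

lemma affine_p:
  assumes g: "smooth3 g" and dd: "\<And>j j' x w p. Dd (eP j) (Dd (eP j') g) x w p = 0"
  shows "g x w p = (\<Sum>j\<in>UNIV. Dd (eP j) g x w c * (p $ j - c $ j)) + g x w c"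
proof -
  define r where "r = (\<lambda>x w p. g x w p - (\<Sum>j\<in>UNIV. Dd (eP j) g x w c * (p $ j - c $ j)) - g x w c)"
  have sr: "smooth3 r" unfolding r_def using g by simp
  have dr: "Dd (eP k) r = (\<lambda>x w p. Dd (eP k) g x w p - Dd (eP k) g x w c)" for k
    unfolding r_def using g by (simp add: Dd_evc)
  have drc: "Dd (eP k) r x w p = 0" for k x w p
  proof -
    have "Dd (eP k) r x w p = Dd (eP k) r x w c"
    proof (rule const_p)
      show "smooth3 (Dd (eP k) r)" using sr by simp
      fix l x w p show "Dd (eP l) (Dd (eP k) r) x w p = 0"
        unfolding dr using g dd by (simp add: Dd_evc)
    qed
    then show ?thesis unfolding dr by simp
  qed
  have "r x w p = r x w c" by (rule const_p[OF sr drc])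
  then show ?thesis unfolding r_def by simp
qed


lemma Dw2_lift: "Dw2 k a x w = Dw k (\<lambda>x w p. a x w) x w p" by (simp add: Dw2_def Dw_def)
lemma Dx2_lift: "Dx2 a x w = Dx (\<lambda>x w p. a x w) x w p" by (simp add: Dx2_def Dx_def)

lemma sol_Dd:
  assumes "is_solution FF F1 f"
  shows "smooth3 f" and "FF j j' = Dd (eP j) (Dd (eP j') f)"
    and "F1 j = (\<lambda>x w p. Dd (eW j) f x w p - Dd eX (Dd (eP j) f) x w p - (\<Sum>k\<in>UNIV. Dd (eW k) (Dd (eP j) f) x w p * p $ k))"
proof -
  show sf: "smooth3 f" using assms by (simp add: is_solution_def)
  show "FF j j' = Dd (eP j) (Dd (eP j') f)"
    using assms sf by (auto simp: is_solution_def Dp_Dd[symmetric] fun_eq_iff)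
  show "F1 j = (\<lambda>x w p. Dd (eW j) f x w p - Dd eX (Dd (eP j) f) x w p - (\<Sum>k\<in>UNIV. Dd (eW k) (Dd (eP j) f) x w p * p $ k))"
    using assms sf by (auto simp: is_solution_def Dp_Dd Dw_Dd Dx_Dd fun_eq_iff)
qed

lemma nec_P:
  assumes sol: "is_solution FF F1 f"
  shows "Phi FF F1 j' j = (\<lambda>x w p. Dd (eW j) (Dd (eP j') f) x w p - Dd (eW j') (Dd (eP j) f) x w p)"
proof -
  note s = sol_Dd[OF sol]
  show ?thesis
    unfolding Phi_def s(2) s(3) using s(1)
    by (simp add: Dp_Dd Dx_Dd Dw_Dd Dd_comm sum.distrib sum_subtractf algebra_simps)
qed


lemma nec_a:
  assumes sol: "is_solution FF F1 f"
  shows "Dp j'' (FF j j') x w p = Dp j' (FF j j'') x w p"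
proof -
  note s = sol_Dd[OF sol]
  show ?thesis unfolding s(2) using s(1) by (simp add: Dp_Dd Dd_comm)
qed

lemma nec_b:
  assumes sol: "is_solution FF F1 f"
  shows "Phi FF F1 j' j x w p + Phi FF F1 j j' x w p = 0"
  unfolding nec_P[OF sol] by simp

lemma nec_c:
  assumes sol: "is_solution FF F1 f" and sym: "\<And>j j'. FF j j' = FF j' j"
  shows "Dp j'' (Phi FF F1 j' j) x w p = Dw j (FF j' j'') x w p - Dw j' (FF j j'') x w p"
proof -
  note s = sol_Dd[OF sol]
  show ?thesis unfolding nec_P[OF sol] s(2) using s(1) by (simp add: Dp_Dd Dw_Dd Dd_comm)
qed

lemma nec_d:
  assumes sol: "is_solution FF F1 f"
  shows "Dw2 k (\<lambda>x w. Phi FF F1 j' j x w c) x w + Dw2 j' (\<lambda>x w. Phi FF F1 j k x w c) x w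
       + Dw2 j (\<lambda>x w. Phi FF F1 k j' x w c) x w = 0"
proof -
  note s = sol_Dd[OF sol]
  show ?thesis unfolding Dw2_lift[where p=c] nec_P[OF sol] using s(1)
    by (simp add: Dw_Dd Dd_evc Dd_comm)
qed

lemma nec_e:
  assumes sol: "is_solution FF F1 f"
  shows "Dw2 j (\<lambda>x w. F1 j' x w c) x w - Dw2 j' (\<lambda>x w. F1 j x w c) x w + Dx2 (\<lambda>x w. Phi FF F1 j' j x w c) x w
                    + (\<Sum>k\<in>UNIV. c $ k * Dw2 k (\<lambda>x w. Phi FF F1 j' j x w c) x w) = 0"
proof -
  note s = sol_Dd[OF sol]
  show ?thesis unfolding Dw2_lift[where p=c] Dx2_lift[where p=c] nec_P[OF sol] s(3) using s(1)
    by (simp add: Dw_Dd Dx_Dd Dd_evc Dd_comm sum.distrib sum_subtractf algebra_simps)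
qed


lemma char_fwd:
  assumes sol: "is_solution FF F1 f"
    and fb: "smooth3 fb" and fbdd: "\<forall>j j' x w p. Dp j (Dp j' fb) x w p = FF j j' x w p"
    and fb0: "\<forall>x w. fb x w c = 0" and fb1: "\<forall>j x w. Dp j fb x w c = 0"
  shows "\<exists>A :: 'm::finite \<Rightarrow> 'm fn2. \<exists>A0 :: 'm fn2.
              (\<forall>j. smooth2 (A j)) \<and> smooth2 A0 \<and>
              (\<forall>j j' x w. Dw2 j (A j') x w - Dw2 j' (A j) x w = Phi FF F1 j' j x w c) \<and>
              (\<forall>j x w. Dw2 j A0 x w = F1 j x w c + Dx2 (A j) x w
                                      + (\<Sum>k\<in>UNIV. c $ k * Dw2 k (A j) x w)) \<and>
              f = (\<lambda>x w p. fb x w p + (\<Sum>j\<in>UNIV. A j x w * (p $ j - c $ j)) + A0 x w)"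
proof -
  note s = sol_Dd[OF sol]
  define A where "A = (\<lambda>j x w. Dp j f x w c)"
  define A0 where "A0 = (\<lambda>x w. f x w c)"
  have sA: "\<forall>j. smooth2 (A j)" unfolding A_def using s(1) by simp
  have sA0: "smooth2 A0" unfolding A0_def using s(1) by simp
  have e1: "\<forall>j j' x w. Dw2 j (A j') x w - Dw2 j' (A j) x w = Phi FF F1 j' j x w c"
    unfolding A_def Dw2_lift[where p=c] nec_P[OF sol] using s(1)
    by (simp add: Dw_Dd Dp_Dd Dd_evc)
  have e2: "\<forall>j x w. Dw2 j A0 x w = F1 j x w c + Dx2 (A j) x w + (\<Sum>k\<in>UNIV. c $ k * Dw2 k (A j) x w)"
    unfolding A_def A0_def Dw2_lift[where p=c] Dx2_lift[where p=c] s(3) using s(1)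
    by (simp add: Dw_Dd Dp_Dd Dx_Dd Dd_evc mult.commute)
  have fbdd': "Dd (eP j) (Dd (eP j') fb) = Dd (eP j) (Dd (eP j') f)" for j j'
    using fbdd fb s(1) unfolding s(2) by (auto simp: Dp_Dd fun_eq_iff)
  have fb1': "Dd (eP j) fb x w c = 0" for j x w using fb1 fb by (simp add: Dp_Dd)
  have e3: "f = (\<lambda>x w p. fb x w p + (\<Sum>j\<in>UNIV. A j x w * (p $ j - c $ j)) + A0 x w)"
  proof (intro ext)
    fix x w p
    define g where "g = (\<lambda>x w p. f x w p - fb x w p)"
    have sg: "smooth3 g" unfolding g_def using s(1) fb by simp
    have "g x w p = (\<Sum>j\<in>UNIV. Dd (eP j) g x w c * (p $ j - c $ j)) + g x w c"
    proof (rule affine_p[OF sg])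
      fix j j' x w p show "Dd (eP j) (Dd (eP j') g) x w p = 0"
        unfolding g_def using s(1) fb fbdd' by simp
    qed
    then show "f x w p = fb x w p + (\<Sum>j\<in>UNIV. A j x w * (p $ j - c $ j)) + A0 x w"
      unfolding g_def A_def A0_def using s(1) fb fb1' fb0 by (simp add: Dp_Dd)
  qed
  show ?thesis using sA sA0 e1 e2 e3 by blast
qed


definition EL :: "'m::finite \<Rightarrow> 'm fn3 \<Rightarrow> 'm fn3" where
  "EL j g = (\<lambda>x w p. Dw j g x w p - Dx (Dp j g) x w p - (\<Sum>k\<in>UNIV. Dw k (Dp j g) x w p * p $ k))"

lemma smooth3_Phi: "(\<And>j j'. smooth3 (FF j j')) \<Longrightarrow> (\<And>j. smooth3 (F1 j)) \<Longrightarrow> smooth3 (Phi FF F1 j' j)"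
  unfolding Phi_def by simp

lemma fb_id:
  fixes FF :: "'m::finite \<Rightarrow> 'm \<Rightarrow> 'm fn3"
  assumes FF_smooth: "\<And>j j'. smooth3 (FF j j')" and F1_smooth: "\<And>j. smooth3 (F1 j)"
    and cc: "\<forall>j j' j'' x w p. Dp j'' (Phi FF F1 j' j) x w p = Dw j (FF j' j'') x w p - Dw j' (FF j j'') x w p"
    and fb: "smooth3 fb" and fbdd: "\<forall>j j' x w p. Dp j (Dp j' fb) x w p = FF j j' x w p"
    and fb0: "\<forall>x w. fb x w c = 0" and fb1: "\<forall>j x w. Dp j fb x w c = 0"
  shows "EL j fb x w p = F1 j x w p - F1 j x w c - (\<Sum>i\<in>UNIV. Phi FF F1 i j x w c * (p $ i - c $ i))"
proof -
  have FFd: "FF j j' = Dd (eP j) (Dd (eP j') fb)" for j j'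
    using fbdd fb by (auto simp: Dp_Dd fun_eq_iff)
  have sPhi: "smooth3 (Phi FF F1 i j)" for i j by (rule smooth3_Phi[OF FF_smooth F1_smooth])
  have cdd: "Dd (eP l) (Phi FF F1 i j) x w p = Dd (eW j) (Dd (eP i) (Dd (eP l) fb)) x w p - Dd (eW i) (Dd (eP j) (Dd (eP l) fb)) x w p" for l i j x w p
    using cc sPhi fb unfolding FFd by (simp add: Dp_Dd Dw_Dd)
  have fbW1: "Dd (eW k) (Dd (eP i) fb) x w c = 0" for k i x w
    using Dd_evc_zero[of "Dd (eP i) fb" c "eW k"] fb fb1 by (simp add: Dp_Dd)
  have fbW2: "Dd (eP i) (Dd (eW k) fb) x w c = 0" for k i x w
    using fbW1 fb by (simp add: Dd_comm)
  have fbX1: "Dd eX (Dd (eP i) fb) x w c = 0" for i x w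
    using Dd_evc_zero[of "Dd (eP i) fb" c "eX"] fb fb1 by (simp add: Dp_Dd)
  have fbX2: "Dd (eP i) (Dd eX fb) x w c = 0" for i x w
    using fbX1 fb by (simp add: Dd_comm)
  have fbW0: "Dd (eW k) fb x w c = 0" for k x w
    using Dd_evc_zero[of fb c "eW k"] fb fb0 by simp
  define H where "H = (\<lambda>i j x w p. Dd (eW j) (Dd (eP i) fb) x w p - Dd (eW i) (Dd (eP j) fb) x w p - Phi FF F1 i j x w p)"
  have Hc: "H i j x w p = H i j x w c" for i j x w p
  proof (rule const_p)
    show "smooth3 (H i j)" unfolding H_def using fb sPhi by simp
    fix l x w p show "Dd (eP l) (H i j) x w p = 0"
      unfolding H_def using fb sPhi cdd by (simp add: Dd_comm)
  qed
  have Hc0: "H i j x w c = - Phi FF F1 i j x w c" for i j x w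
    unfolding H_def using fbW1 fbW2 by simp
  define K where "K = (\<lambda>x w p. EL j fb x w p - F1 j x w p + F1 j x w c + (\<Sum>i\<in>UNIV. Phi FF F1 i j x w c * (p $ i - c $ i)))"
  have sK: "smooth3 K" unfolding K_def EL_def using fb F1_smooth sPhi by simp
  have dK: "Dd (eP i) K x w p = H i j x w p + Phi FF F1 i j x w c" for i x w p
    unfolding K_def EL_def H_def using fb F1_smooth sPhi
    by (simp add: Dp_Dd Dw_Dd Dx_Dd Dd_evc Phi_def FFd Dd_comm sum.distrib sum_subtractf algebra_simps)
  have dK0: "Dd (eP i) K x w p = 0" for i x w p
    unfolding dK Hc[of i j x w p] Hc0 by simp
  have "K x w p = K x w c" by (rule const_p[OF sK dK0])
  also have "K x w c = 0"
    unfolding K_def EL_def using fb fbW1 fbW2 fbX1 fbX2 fbW0 by (simp add: Dp_Dd Dw_Dd Dx_Dd)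
  finally show ?thesis unfolding K_def by (simp add: algebra_simps)
qed


lemma Dd2_zero[simp]: "smooth2 g \<Longrightarrow> Dd2 0 g = (\<lambda>x w. 0)"
  unfolding smooth2_U2 Dd2_def by (simp add: pd_zero)

lemma char_bwd:
  fixes FF :: "'m::finite \<Rightarrow> 'm \<Rightarrow> 'm fn3"
  assumes FF_smooth: "\<And>j j'. smooth3 (FF j j')" and F1_smooth: "\<And>j. smooth3 (F1 j)"
    and cc: "\<forall>j j' j'' x w p. Dp j'' (Phi FF F1 j' j) x w p = Dw j (FF j' j'') x w p - Dw j' (FF j j'') x w p"
    and fb: "smooth3 fb" and fbdd: "\<forall>j j' x w p. Dp j (Dp j' fb) x w p = FF j j' x w p"
    and fb0: "\<forall>x w. fb x w c = 0" and fb1: "\<forall>j x w. Dp j fb x w c = 0"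
    and sA: "\<forall>j. smooth2 (A j)" and sA0: "smooth2 A0"
    and eqA: "\<forall>j j' x w. Dw2 j (A j') x w - Dw2 j' (A j) x w = Phi FF F1 j' j x w c"
    and eqA0: "\<forall>j x w. Dw2 j A0 x w = F1 j x w c + Dx2 (A j) x w + (\<Sum>k\<in>UNIV. c $ k * Dw2 k (A j) x w)"
  shows "is_solution FF F1 (\<lambda>x w p. fb x w p + (\<Sum>j\<in>UNIV. A j x w * (p $ j - c $ j)) + A0 x w)"
proof -
  define f where "f = (\<lambda>x w p. fb x w p + (\<Sum>j\<in>UNIV. A j x w * (p $ j - c $ j)) + A0 x w)"
  have sA': "smooth2 (A j)" for j using sA by simp
  have sf: "smooth3 f" unfolding f_def using fb sA' sA0 by simp
  have FFd: "FF j j' = Dd (eP j) (Dd (eP j') fb)" for j j'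
    using fbdd fb by (auto simp: Dp_Dd fun_eq_iff)
  have d2: "Dp j (Dp j' f) x w p = FF j j' x w p" for j j' x w p
    unfolding f_def FFd using fb sA' sA0 by (simp add: Dp_Dd Dd_lift)
  have eqA': "Dd2 (eW2 j) (A i) x w = Dd2 (eW2 i) (A j) x w + Phi FF F1 i j x w c" for i j x w
  proof -
    have "Dw2 j (A i) x w - Dw2 i (A j) x w = Phi FF F1 i j x w c" using eqA by blast
    then have "Dd2 (eW2 j) (A i) x w - Dd2 (eW2 i) (A j) x w = Phi FF F1 i j x w c"
      by (simp only: Dw2_Dd2[OF sA'])
    then show ?thesis by linarith
  qed
  have eqA0': "Dd2 (eW2 j) A0 x w = F1 j x w c + Dd2 eX2 (A j) x w + (\<Sum>k\<in>UNIV. c $ k * Dd2 (eW2 k) (A j) x w)" for j x w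
  proof -
    have "Dw2 j A0 x w = F1 j x w c + Dx2 (A j) x w + (\<Sum>k\<in>UNIV. c $ k * Dw2 k (A j) x w)" using eqA0 by blast
    then show ?thesis by (simp only: Dw2_Dd2[OF sA'] Dw2_Dd2[OF sA0] Dx2_Dd2[OF sA'])
  qed
  have ELf: "EL j f x w p = EL j fb x w p + (\<Sum>i\<in>UNIV. Dd2 (eW2 j) (A i) x w * (p $ i - c $ i))
        + Dd2 (eW2 j) A0 x w - Dd2 eX2 (A j) x w - (\<Sum>k\<in>UNIV. Dd2 (eW2 k) (A j) x w * p $ k)" for j x w p
    unfolding f_def EL_def using fb sA' sA0
    by (simp add: Dp_Dd Dw_Dd Dx_Dd Dd_lift sum.distrib sum_subtractf algebra_simps)
  have E: "EL j f x w p = F1 j x w p" for j x w p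
  proof -
    have "EL j f x w p = F1 j x w p - F1 j x w c - (\<Sum>i\<in>UNIV. Phi FF F1 i j x w c * (p $ i - c $ i))
         + (\<Sum>i\<in>UNIV. (Dd2 (eW2 i) (A j) x w + Phi FF F1 i j x w c) * (p $ i - c $ i))
         + (F1 j x w c + Dd2 eX2 (A j) x w + (\<Sum>k\<in>UNIV. c $ k * Dd2 (eW2 k) (A j) x w))
         - Dd2 eX2 (A j) x w - (\<Sum>k\<in>UNIV. Dd2 (eW2 k) (A j) x w * p $ k)"
      unfolding ELf fb_id[OF FF_smooth F1_smooth cc fb fbdd fb0 fb1] eqA'[where j=j] eqA0' by simp
    also have "\<dots> = F1 j x w p"
      by (simp add: sum.distrib sum_subtractf algebra_simps)
    finally show ?thesis .
  qed
  show ?thesis unfolding f_def[symmetric] is_solution_def using sf d2 E by (simp add: EL_def)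
qed


lemma U2_add: "U2 (\<lambda>x w. a x w + b x w) = (\<lambda>z. U2 a z + U2 b z)" by (auto simp: U2_def)
lemma U2_diff: "U2 (\<lambda>x w. a x w - b x w) = (\<lambda>z. U2 a z - U2 b z)" by (auto simp: U2_def)
lemma U2_mult: "U2 (\<lambda>x w. a x w * b x w) = (\<lambda>z. U2 a z * U2 b z)" by (auto simp: U2_def)
lemma U2_sum: "U2 (\<lambda>x w. \<Sum>i\<in>S. a i x w) = (\<lambda>z. \<Sum>i\<in>S. U2 (a i) z)" by (auto simp: U2_def)
lemma U2_const: "U2 (\<lambda>x w. k) = (\<lambda>z. k)" by (auto simp: U2_def)

lemma smooth2_add[simp]: "smooth2 a \<Longrightarrow> smooth2 b \<Longrightarrow> smooth2 (\<lambda>x w. a x w + b x w)"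
  unfolding smooth2_U2 U2_add by (rule smooth_add)
lemma smooth2_diff[simp]: "smooth2 a \<Longrightarrow> smooth2 b \<Longrightarrow> smooth2 (\<lambda>x w. a x w - b x w)"
  unfolding smooth2_U2 U2_diff by (rule smooth_diff)
lemma smooth2_mult[simp]: "smooth2 a \<Longrightarrow> smooth2 b \<Longrightarrow> smooth2 (\<lambda>x w. a x w * b x w)"
  unfolding smooth2_U2 U2_mult by (rule smooth_mult)
lemma smooth2_sum[simp]: "finite S \<Longrightarrow> (\<And>i. i \<in> S \<Longrightarrow> smooth2 (a i)) \<Longrightarrow> smooth2 (\<lambda>x w. \<Sum>i\<in>S. a i x w)"
  unfolding smooth2_U2 U2_sum by (rule smooth_sum)
lemma smooth2_const[simp]: "smooth2 (\<lambda>x w. k)"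
  unfolding smooth2_U2 U2_const by (rule smooth_const)
lemma smooth2_Dd2'[simp]: "smooth2 g \<Longrightarrow> smooth2 (Dd2 e g)" by (rule smooth2_Dd2)
lemma smooth2_Dw2[simp]: "smooth2 g \<Longrightarrow> smooth2 (Dw2 k g)" by (simp add: Dw2_Dd2)
lemma smooth2_Dx2[simp]: "smooth2 g \<Longrightarrow> smooth2 (Dx2 g)" by (simp add: Dx2_Dd2)

lemma Dd2_add[simp]: "smooth2 a \<Longrightarrow> smooth2 b \<Longrightarrow> Dd2 e (\<lambda>x w. a x w + b x w) = (\<lambda>x w. Dd2 e a x w + Dd2 e b x w)"
  unfolding smooth2_U2 Dd2_def U2_add by (simp add: pd_add_fun)
lemma Dd2_diff[simp]: "smooth2 a \<Longrightarrow> smooth2 b \<Longrightarrow> Dd2 e (\<lambda>x w. a x w - b x w) = (\<lambda>x w. Dd2 e a x w - Dd2 e b x w)"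
  unfolding smooth2_U2 Dd2_def U2_diff by (simp add: pd_diff_fun)
lemma Dd2_mult[simp]: "smooth2 a \<Longrightarrow> smooth2 b \<Longrightarrow> Dd2 e (\<lambda>x w. a x w * b x w) = (\<lambda>x w. Dd2 e a x w * b x w + a x w * Dd2 e b x w)"
  unfolding smooth2_U2 Dd2_def U2_mult by (simp add: pd_mult_fun)
lemma Dd2_sum[simp]: "finite S \<Longrightarrow> (\<And>i. i \<in> S \<Longrightarrow> smooth2 (a i)) \<Longrightarrow> Dd2 e (\<lambda>x w. \<Sum>i\<in>S. a i x w) = (\<lambda>x w. \<Sum>i\<in>S. Dd2 e (a i) x w)"
  unfolding smooth2_U2 Dd2_def U2_sum by (simp add: pd_sum_fun)
lemma Dd2_const[simp]: "Dd2 e (\<lambda>x w. k) = (\<lambda>x w. 0)"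
  unfolding Dd2_def U2_const by (simp add: pd_const_fun)

lemma orth_eP: "eP i \<bullet> eP j = (if i = j then 1 else (0::real))"
  by (simp add: eP_def inner_Pair inner_axis)
lemma orth_eW2: "eW2 i \<bullet> eW2 j = (if i = j then 1 else (0::real))"
  by (simp add: eW2_def inner_Pair inner_axis)

lemma pd_U3_Dd: "pd (U3 g) e z = Dd e g (fst z) (fst (snd z)) (snd (snd z))"
  by (cases z) (simp add: Dd_def)
lemma pd_U2_Dd2: "pd (U2 g) e z = Dd2 e g (fst z) (snd z)"
  by (cases z) (simp add: Dd2_def)

lemma fb_exists:
  fixes FF :: "'m::finite \<Rightarrow> 'm \<Rightarrow> 'm fn3" and c :: "real^'m"
  assumes FF_sym: "\<And>j j'. FF j j' = FF j' j" and FF_smooth: "\<And>j j'. smooth3 (FF j j')"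
    and aa: "\<forall>j j' j'' x w p. Dp j'' (FF j j') x w p = Dp j' (FF j j'') x w p"
  shows "\<exists>fb. smooth3 fb \<and> (\<forall>j j' x w p. Dp j (Dp j' fb) x w p = FF j j' x w p) \<and>
             (\<forall>x w. fb x w c = 0) \<and> (\<forall>j x w. Dp j fb x w c = 0)"
proof -
  interpret P: poinc "eP :: 'm \<Rightarrow> 'm pt3" "(0, 0, c)"
    by unfold_locales (rule orth_eP)
  have lam: "P.lam i (x, w, p) = p $ i - c $ i" for i x w p
    by (simp add: P.lam_def eP_def inner_Pair inner_axis inner_diff_left)
  define B where "B = (\<lambda>j' z. integral {0..1} (\<lambda>t. \<Sum>i\<in>UNIV. U3 (FF i j') (P.gam z t) * P.lam i z))"
  have smB: "smooth_fn (U3 (FF i j'))" for i j' using FF_smooth by (simp add: smooth3_U3)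
  have clB: "pd (U3 (FF i j')) (eP l) z = pd (U3 (FF l j')) (eP i) z" for i j' l z
  proof -
    have "Dp l (FF j' i) x w p = Dp i (FF j' l) x w p" for x w p using aa by blast
    then have "Dd (eP l) (FF i j') x w p = Dd (eP i) (FF l j') x w p" for x w p
      using FF_smooth by (simp add: Dp_Dd FF_sym[of j' i] FF_sym[of j' l])
    then show ?thesis by (simp add: pd_U3_Dd)
  qed
  have B1: "smooth_fn (B j')" for j' unfolding B_def by (rule P.poincare1(1)[OF smB clB])
  have B2: "pd (B j') (eP i) z = U3 (FF i j') z" for i j' z unfolding B_def by (rule P.poincare1(2)[OF smB clB])
  have B3: "(\<forall>i. P.lam i z = 0) \<Longrightarrow> B j' z = 0" for j' z unfolding B_def by (rule P.poincare1(3)[OF smB clB])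
  have clG: "pd (B i) (eP j) z = pd (B j) (eP i) z" for i j z
    unfolding B2 using FF_sym by simp
  define G where "G = (\<lambda>z. integral {0..1} (\<lambda>t. \<Sum>i\<in>UNIV. B i (P.gam z t) * P.lam i z))"
  have G1: "smooth_fn G" unfolding G_def by (rule P.poincare1(1)[OF B1 clG])
  have G2: "pd G (eP i) z = B i z" for i z unfolding G_def by (rule P.poincare1(2)[OF B1 clG])
  have G3: "(\<forall>i. P.lam i z = 0) \<Longrightarrow> G z = 0" for z unfolding G_def by (rule P.poincare1(3)[OF B1 clG])
  define fb where "fb = (\<lambda>x w p. G (x, w, p))"
  have Ufb: "U3 fb = G" by (auto simp: fb_def U3_def)
  have sfb: "smooth3 fb" using G1 by (simp add: smooth3_U3 Ufb)
  have Ufb1: "U3 (Dp j fb) = B j" for j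
    using sfb by (simp add: Dp_Dd U3_Dd Ufb G2 fun_eq_iff)
  have sfb1: "smooth3 (Dp j fb)" for j using sfb by simp
  have d2: "Dp j (Dp j' fb) x w p = FF j j' x w p" for j j' x w p
    using sfb1[of j'] by (simp add: Dp_Dd[of "Dp j' fb"] Dd_def Ufb1 B2)
  have z0: "fb x w c = 0" for x w unfolding fb_def by (rule G3) (simp add: lam)
  have z1: "Dp j fb x w c = 0" for j x w
  proof -
    have "Dp j fb x w c = U3 (Dp j fb) (x, w, c)" by simp
    also have "\<dots> = 0" unfolding Ufb1 by (rule B3) (simp add: lam)
    finally show ?thesis .
  qed
  show ?thesis using sfb d2 z0 z1 by blast
qed


lemma A_exists:
  fixes FF :: "'m::finite \<Rightarrow> 'm \<Rightarrow> 'm fn3" and c :: "real^'m"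
  assumes FF_smooth: "\<And>j j'. smooth3 (FF j j')" and F1_smooth: "\<And>j. smooth3 (F1 j)"
    and bb: "\<forall>j j' x w p. Phi FF F1 j' j x w p + Phi FF F1 j j' x w p = 0"
    and dd: "\<forall>j j' k x w. Dw2 k (\<lambda>x w. Phi FF F1 j' j x w c) x w + Dw2 j' (\<lambda>x w. Phi FF F1 j k x w c) x w
                + Dw2 j (\<lambda>x w. Phi FF F1 k j' x w c) x w = 0"
  shows "\<exists>A :: 'm \<Rightarrow> 'm fn2. (\<forall>j. smooth2 (A j)) \<and>
           (\<forall>j j' x w. Dw2 j (A j') x w - Dw2 j' (A j) x w = Phi FF F1 j' j x w c)"
proof -
  interpret P: poinc "eW2 :: 'm \<Rightarrow> 'm pt2" "0"
    by unfold_locales (rule orth_eW2)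
  define \<phi> where "\<phi> = (\<lambda>j' j x w. Phi FF F1 j' j x w c)"
  have sphi: "smooth2 (\<phi> j' j)" for j' j unfolding \<phi>_def using smooth3_Phi[OF FF_smooth F1_smooth] by simp
  define \<omega> where "\<omega> = (\<lambda>j j'. U2 (\<phi> j' j))"
  have sm: "smooth_fn (\<omega> j j')" for j j' unfolding \<omega>_def using sphi by (simp add: smooth2_U2)
  have anti: "\<omega> j j' z = - \<omega> j' j z" for j j' z
  proof -
    have "Phi FF F1 j' j (fst z) (snd z) c + Phi FF F1 j j' (fst z) (snd z) c = 0" using bb by blast
    then show ?thesis unfolding \<omega>_def \<phi>_def by (cases z) simp
  qed
  have cl: "pd (\<omega> j j') (eW2 k) z + pd (\<omega> j' k) (eW2 j) z + pd (\<omega> k j) (eW2 j') z = 0" for j j' k z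
  proof -
    have "Dw2 k (\<phi> j' j) (fst z) (snd z) + Dw2 j' (\<phi> j k) (fst z) (snd z) + Dw2 j (\<phi> k j') (fst z) (snd z) = 0"
      using dd unfolding \<phi>_def by blast
    then show ?thesis unfolding \<omega>_def pd_U2_Dd2 using sphi by (simp add: Dw2_Dd2 algebra_simps)
  qed
  define A2 where "A2 = (\<lambda>j' z. integral {0..1} (\<lambda>t. t ^ 1 * (\<Sum>k\<in>UNIV. \<omega> k j' (P.gam z t) * P.lam k z)))"
  have A1: "smooth_fn (A2 j')" for j' unfolding A2_def by (rule P.poincare2(1)[OF sm anti cl])
  have A2: "pd (A2 j') (eW2 j) z - pd (A2 j) (eW2 j') z = \<omega> j j' z" for j j' z
    unfolding A2_def by (rule P.poincare2(2)[OF sm anti cl])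
  define A where "A = (\<lambda>j' x w. A2 j' (x, w))"
  have UA: "U2 (A j') = A2 j'" for j' by (auto simp: A_def U2_def)
  have sA: "smooth2 (A j)" for j using A1 by (simp add: smooth2_U2 UA)
  have eq: "Dw2 j (A j') x w - Dw2 j' (A j) x w = Phi FF F1 j' j x w c" for j j' x w
  proof -
    have "Dw2 j (A j') x w - Dw2 j' (A j) x w = pd (A2 j') (eW2 j) (x, w) - pd (A2 j) (eW2 j') (x, w)"
      using sA by (simp add: Dw2_Dd2 Dd2_def UA)
    also have "\<dots> = \<omega> j j' (x, w)" by (rule A2)
    finally show ?thesis by (simp add: \<omega>_def \<phi>_def)
  qed
  show ?thesis using sA eq by blast
qed

lemma A0_exists:
  fixes \<psi> :: "'m::finite \<Rightarrow> 'm fn2" and \<phi> :: "'m \<Rightarrow> 'm \<Rightarrow> 'm fn2" and c :: "real^'m"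
  assumes spsi: "\<And>j. smooth2 (\<psi> j)" and sphi: "\<And>j j'. smooth2 (\<phi> j' j)"
    and sA: "\<forall>j. smooth2 (A j)"
    and eqA: "\<forall>j j' x w. Dw2 j (A j') x w - Dw2 j' (A j) x w = \<phi> j' j x w"
    and ee: "\<forall>j j' x w. Dw2 j (\<psi> j') x w - Dw2 j' (\<psi> j) x w + Dx2 (\<phi> j' j) x w
                    + (\<Sum>k\<in>UNIV. c $ k * Dw2 k (\<phi> j' j) x w) = 0"
  shows "\<exists>A0. smooth2 A0 \<and> (\<forall>j x w. Dw2 j A0 x w = \<psi> j x w + Dx2 (A j) x w
                                      + (\<Sum>k\<in>UNIV. c $ k * Dw2 k (A j) x w))"
proof -
  interpret P: poinc "eW2 :: 'm \<Rightarrow> 'm pt2" "0"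
    by unfold_locales (rule orth_eW2)
  have sA': "smooth2 (A j)" for j using sA by simp
  define b where "b = (\<lambda>j x w. \<psi> j x w + Dd2 eX2 (A j) x w + (\<Sum>k\<in>UNIV. c $ k * Dd2 (eW2 k) (A j) x w))"
  have sb: "smooth2 (b j)" for j unfolding b_def using spsi sA' by simp
  have eqA': "Dd2 (eW2 j) (A j') = (\<lambda>x w. Dd2 (eW2 j') (A j) x w + \<phi> j' j x w)" for j j'
  proof (intro ext)
    fix x w
    have "Dw2 j (A j') x w - Dw2 j' (A j) x w = \<phi> j' j x w" using eqA by blast
    then show "Dd2 (eW2 j) (A j') x w = Dd2 (eW2 j') (A j) x w + \<phi> j' j x w"
      using sA' by (simp add: Dw2_Dd2)
  qed
  have ee': "Dd2 (eW2 j) (\<psi> j') x w - Dd2 (eW2 j') (\<psi> j) x w + Dd2 eX2 (\<phi> j' j) x w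
                    + (\<Sum>k\<in>UNIV. c $ k * Dd2 (eW2 k) (\<phi> j' j) x w) = 0" for j j' x w
    using ee spsi sphi by (simp add: Dw2_Dd2 Dx2_Dd2)
  have cl: "pd (U2 (b i)) (eW2 j) z = pd (U2 (b j)) (eW2 i) z" for i j z
  proof -
    have X: "Dd2 eX2 (Dd2 (eW2 j) (A i)) = (\<lambda>x w. Dd2 eX2 (Dd2 (eW2 i) (A j)) x w + Dd2 eX2 (\<phi> i j) x w)"
      unfolding eqA'[of j i] using sA' sphi by simp
    have W: "Dd2 (eW2 k) (Dd2 (eW2 j) (A i)) = (\<lambda>x w. Dd2 (eW2 k) (Dd2 (eW2 i) (A j)) x w + Dd2 (eW2 k) (\<phi> i j) x w)" for k
      unfolding eqA'[of j i] using sA' sphi by simp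
    have "Dd2 (eW2 j) (b i) x w = Dd2 (eW2 i) (b j) x w" for x w
    proof -
      have "Dd2 (eW2 j) (b i) x w = Dd2 (eW2 j) (\<psi> i) x w + Dd2 eX2 (Dd2 (eW2 j) (A i)) x w
              + (\<Sum>k\<in>UNIV. c $ k * Dd2 (eW2 k) (Dd2 (eW2 j) (A i)) x w)"
        unfolding b_def using spsi sA' by (simp add: Dd2_comm[of "A i"])
      also have "\<dots> = Dd2 (eW2 j) (\<psi> i) x w + Dd2 eX2 (Dd2 (eW2 i) (A j)) x w + Dd2 eX2 (\<phi> i j) x w
              + (\<Sum>k\<in>UNIV. c $ k * Dd2 (eW2 k) (Dd2 (eW2 i) (A j)) x w) + (\<Sum>k\<in>UNIV. c $ k * Dd2 (eW2 k) (\<phi> i j) x w)"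
        unfolding X W by (simp add: sum.distrib algebra_simps)
      also have "\<dots> = Dd2 (eW2 i) (\<psi> j) x w + Dd2 eX2 (Dd2 (eW2 i) (A j)) x w
              + (\<Sum>k\<in>UNIV. c $ k * Dd2 (eW2 k) (Dd2 (eW2 i) (A j)) x w)"
        using ee'[of j i x w] by simp
      also have "\<dots> = Dd2 (eW2 i) (b j) x w"
        unfolding b_def using spsi sA' by (simp add: Dd2_comm[of "A j"])
      finally show ?thesis .
    qed
    then show ?thesis by (simp add: pd_U2_Dd2)
  qed
  have smb: "smooth_fn (U2 (b i))" for i using sb by (simp add: smooth2_U2)
  define G where "G = (\<lambda>z. integral {0..1} (\<lambda>t. \<Sum>i\<in>UNIV. U2 (b i) (P.gam z t) * P.lam i z))"
  have G1: "smooth_fn G" unfolding G_def by (rule P.poincare1(1)[OF smb cl])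
  have G2: "pd G (eW2 i) z = U2 (b i) z" for i z unfolding G_def by (rule P.poincare1(2)[OF smb cl])
  define A0 where "A0 = (\<lambda>x w. G (x, w))"
  have UA0: "U2 A0 = G" by (auto simp: A0_def U2_def)
  have sA0: "smooth2 A0" using G1 by (simp add: smooth2_U2 UA0)
  have "Dw2 j A0 x w = \<psi> j x w + Dx2 (A j) x w + (\<Sum>k\<in>UNIV. c $ k * Dw2 k (A j) x w)" for j x w
    using sA0 sA' by (simp add: Dw2_Dd2 Dx2_Dd2 Dd2_def UA0 G2 b_def)
  then show ?thesis using sA0 by blast
qed


lemma fb_unique:
  assumes fb: "smooth3 fb" and fbdd: "\<forall>j j' x w p. Dp j (Dp j' fb) x w p = FF j j' x w p"
    and fb0: "\<forall>x w. fb x w c = 0" and fb1: "\<forall>j x w. Dp j fb x w c = 0"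
    and gb: "smooth3 gb" and gbdd: "\<forall>j j' x w p. Dp j (Dp j' gb) x w p = FF j j' x w p"
    and gb0: "\<forall>x w. gb x w c = 0" and gb1: "\<forall>j x w. Dp j gb x w c = 0"
  shows "fb = gb"
proof (intro ext)
  fix x w p
  define g where "g = (\<lambda>x w p. fb x w p - gb x w p)"
  have sg: "smooth3 g" unfolding g_def using fb gb by simp
  have dd: "Dd (eP j) (Dd (eP j') fb) = Dd (eP j) (Dd (eP j') gb)" for j j'
    using fbdd gbdd fb gb by (auto simp: Dp_Dd fun_eq_iff)
  have "g x w p = (\<Sum>j\<in>UNIV. Dd (eP j) g x w c * (p $ j - c $ j)) + g x w c"
  proof (rule affine_p[OF sg])
    fix j j' x w p show "Dd (eP j) (Dd (eP j') g) x w p = 0"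
      unfolding g_def using fb gb dd by simp
  qed
  moreover have "Dd (eP j) g x w c = 0" for j
    unfolding g_def using fb gb fb1 gb1 by (simp add: Dp_Dd)
  ultimately have "g x w p = 0" unfolding g_def using fb0 gb0 by simp
  then show "fb x w p = gb x w p" unfolding g_def by simp
qed

theorem theorem4p1:
  fixes FF :: "'m::finite \<Rightarrow> 'm \<Rightarrow> 'm fn3"
    and F1 :: "'m \<Rightarrow> 'm fn3"
    and c :: "real^'m"
  assumes FF_sym: "\<And>j j'. FF j j' = FF j' j"
    and FF_smooth: "\<And>j j'. smooth3 (FF j j')"
    and F1_smooth: "\<And>j. smooth3 (F1 j)"
  defines "\<phi> \<equiv> (\<lambda>j' j x w. Phi FF F1 j' j x w c)"
    and "\<psi> \<equiv> (\<lambda>j x w. F1 j x w c)"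
  shows
   "((\<exists>f. is_solution FF F1 f) \<longleftrightarrow>
      ((\<forall>j j' j'' x w p. Dp j'' (FF j j') x w p = Dp j' (FF j j'') x w p) \<and>
       (\<forall>j j' x w p. Phi FF F1 j' j x w p + Phi FF F1 j j' x w p = 0) \<and>
       (\<forall>j j' j'' x w p. Dp j'' (Phi FF F1 j' j) x w p
                          = Dw j (FF j' j'') x w p - Dw j' (FF j j'') x w p) \<and>
       (\<forall>j j' k x w. Dw2 k (\<phi> j' j) x w + Dw2 j' (\<phi> j k) x w + Dw2 j (\<phi> k j') x w = 0) \<and>
       (\<forall>j j' x w. Dw2 j (\<psi> j') x w - Dw2 j' (\<psi> j) x w + Dx2 (\<phi> j' j) x w
                    + (\<Sum>k\<in>UNIV. c $ k * Dw2 k (\<phi> j' j) x w) = 0)))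
    \<and>
    ((\<exists>f. is_solution FF F1 f) \<longrightarrow>
      (\<exists>!fb. smooth3 fb \<and> (\<forall>j j' x w p. Dp j (Dp j' fb) x w p = FF j j' x w p) \<and>
             (\<forall>x w. fb x w c = 0) \<and> (\<forall>j x w. Dp j fb x w c = 0)) \<and>
      (\<forall>fb. smooth3 fb \<and> (\<forall>j j' x w p. Dp j (Dp j' fb) x w p = FF j j' x w p) \<and>
             (\<forall>x w. fb x w c = 0) \<and> (\<forall>j x w. Dp j fb x w c = 0) \<longrightarrow>
        (\<forall>f. is_solution FF F1 f \<longleftrightarrow>
           (\<exists>A :: 'm \<Rightarrow> 'm fn2. \<exists>A0 :: 'm fn2.
              (\<forall>j. smooth2 (A j)) \<and> smooth2 A0 \<and>
              (\<forall>j j' x w. Dw2 j (A j') x w - Dw2 j' (A j) x w = \<phi> j' j x w) \<and>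
              (\<forall>j x w. Dw2 j A0 x w = \<psi> j x w + Dx2 (A j) x w
                                      + (\<Sum>k\<in>UNIV. c $ k * Dw2 k (A j) x w)) \<and>
              f = (\<lambda>x w p. fb x w p + (\<Sum>j\<in>UNIV. A j x w * (p $ j - c $ j)) + A0 x w)))))"

proof -
  have phi: "\<phi> = (\<lambda>j' j x w. Phi FF F1 j' j x w c)" using assms(4) by simp
  have psi: "\<psi> = (\<lambda>j x w. F1 j x w c)" using assms(5) by simp
  define conds where "conds = ((\<forall>j j' j'' x w p. Dp j'' (FF j j') x w p = Dp j' (FF j j'') x w p) \<and>
       (\<forall>j j' x w p. Phi FF F1 j' j x w p + Phi FF F1 j j' x w p = 0) \<and>
       (\<forall>j j' j'' x w p. Dp j'' (Phi FF F1 j' j) x w p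
                          = Dw j (FF j' j'') x w p - Dw j' (FF j j'') x w p) \<and>
       (\<forall>j j' k x w. Dw2 k (\<phi> j' j) x w + Dw2 j' (\<phi> j k) x w + Dw2 j (\<phi> k j') x w = 0) \<and>
       (\<forall>j j' x w. Dw2 j (\<psi> j') x w - Dw2 j' (\<psi> j) x w + Dx2 (\<phi> j' j) x w
                    + (\<Sum>k\<in>UNIV. c $ k * Dw2 k (\<phi> j' j) x w) = 0))"
  have nec: "conds" if sol: "is_solution FF F1 f" for f
    unfolding conds_def phi psi
    by (intro conjI allI nec_a[OF sol] nec_b[OF sol] nec_c[OF sol FF_sym] nec_d[OF sol] nec_e[OF sol])
  have suf: "\<exists>f. is_solution FF F1 f" if cd: "conds"
  proof -
    note cds = cd[unfolded conds_def phi psi]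
    note aa = cds[THEN conjunct1]
    note bb = cds[THEN conjunct2, THEN conjunct1]
    note cc = cds[THEN conjunct2, THEN conjunct2, THEN conjunct1]
    note dd = cds[THEN conjunct2, THEN conjunct2, THEN conjunct2, THEN conjunct1]
    note ee = cds[THEN conjunct2, THEN conjunct2, THEN conjunct2, THEN conjunct2]
    obtain fb where fbx: "smooth3 fb \<and> (\<forall>j j' x w p. Dp j (Dp j' fb) x w p = FF j j' x w p) \<and>
        (\<forall>x w. fb x w c = 0) \<and> (\<forall>j x w. Dp j fb x w c = 0)"
      using fb_exists[where FF=FF and c=c, OF FF_sym FF_smooth aa] ..
    then have fb: "smooth3 fb" "\<forall>j j' x w p. Dp j (Dp j' fb) x w p = FF j j' x w p"
        "\<forall>x w. fb x w c = 0" "\<forall>j x w. Dp j fb x w c = 0" by simp_all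
    obtain A where Ax: "(\<forall>j. smooth2 (A j)) \<and> (\<forall>j j' x w. Dw2 j (A j') x w - Dw2 j' (A j) x w = Phi FF F1 j' j x w c)"
      using A_exists[where FF=FF and c=c, OF FF_smooth F1_smooth bb dd] ..
    then have A: "\<forall>j. smooth2 (A j)" "\<forall>j j' x w. Dw2 j (A j') x w - Dw2 j' (A j) x w = Phi FF F1 j' j x w c"
      by simp_all
    have spsi: "smooth2 (\<lambda>x w. F1 j x w c)" for j using F1_smooth by simp
    have sphi: "smooth2 (\<lambda>x w. Phi FF F1 j' j x w c)" for j j' using smooth3_Phi[OF FF_smooth F1_smooth] by simp
    obtain A0 where A0x: "smooth2 A0 \<and> (\<forall>j x w. Dw2 j A0 x w = F1 j x w c + Dx2 (A j) x w + (\<Sum>k\<in>UNIV. c $ k * Dw2 k (A j) x w))"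
      using A0_exists[where \<psi>="\<lambda>j x w. F1 j x w c" and \<phi>="\<lambda>j' j x w. Phi FF F1 j' j x w c" and A=A and c=c, OF spsi sphi A(1) A(2) ee] ..
    then have A0: "smooth2 A0" "\<forall>j x w. Dw2 j A0 x w = F1 j x w c + Dx2 (A j) x w + (\<Sum>k\<in>UNIV. c $ k * Dw2 k (A j) x w)"
      by simp_all
    have "is_solution FF F1 (\<lambda>x w p. fb x w p + (\<Sum>j\<in>UNIV. A j x w * (p $ j - c $ j)) + A0 x w)"
      by (rule char_bwd[where FF=FF, OF FF_smooth F1_smooth cc fb A(1) A0(1) A(2) A0(2)])
    then show ?thesis by blast
  qed
  have part1: "(\<exists>f. is_solution FF F1 f) \<longleftrightarrow> conds" using nec suf by blast
  have part2: "(\<exists>f. is_solution FF F1 f) \<longrightarrow>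
      (\<exists>!fb. smooth3 fb \<and> (\<forall>j j' x w p. Dp j (Dp j' fb) x w p = FF j j' x w p) \<and>
             (\<forall>x w. fb x w c = 0) \<and> (\<forall>j x w. Dp j fb x w c = 0)) \<and>
      (\<forall>fb. smooth3 fb \<and> (\<forall>j j' x w p. Dp j (Dp j' fb) x w p = FF j j' x w p) \<and>
             (\<forall>x w. fb x w c = 0) \<and> (\<forall>j x w. Dp j fb x w c = 0) \<longrightarrow>
        (\<forall>f. is_solution FF F1 f \<longleftrightarrow>
           (\<exists>A :: 'm \<Rightarrow> 'm fn2. \<exists>A0 :: 'm fn2.
              (\<forall>j. smooth2 (A j)) \<and> smooth2 A0 \<and>
              (\<forall>j j' x w. Dw2 j (A j') x w - Dw2 j' (A j) x w = \<phi> j' j x w) \<and>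
              (\<forall>j x w. Dw2 j A0 x w = \<psi> j x w + Dx2 (A j) x w
                                      + (\<Sum>k\<in>UNIV. c $ k * Dw2 k (A j) x w)) \<and>
              f = (\<lambda>x w p. fb x w p + (\<Sum>j\<in>UNIV. A j x w * (p $ j - c $ j)) + A0 x w))))"
  proof
    assume "\<exists>f. is_solution FF F1 f"
    then obtain f0 where sol0: "is_solution FF F1 f0" by blast
    note cds = nec[OF sol0, unfolded conds_def phi psi]
    note aa = cds[THEN conjunct1]
    note cc = cds[THEN conjunct2, THEN conjunct2, THEN conjunct1]
    obtain fb where fbx: "smooth3 fb \<and> (\<forall>j j' x w p. Dp j (Dp j' fb) x w p = FF j j' x w p) \<and>
        (\<forall>x w. fb x w c = 0) \<and> (\<forall>j x w. Dp j fb x w c = 0)"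
      using fb_exists[where FF=FF and c=c, OF FF_sym FF_smooth aa] ..
    then have fb: "smooth3 fb" "\<forall>j j' x w p. Dp j (Dp j' fb) x w p = FF j j' x w p"
        "\<forall>x w. fb x w c = 0" "\<forall>j x w. Dp j fb x w c = 0" by simp_all
    have ex1: "\<exists>!fb. smooth3 fb \<and> (\<forall>j j' x w p. Dp j (Dp j' fb) x w p = FF j j' x w p) \<and>
             (\<forall>x w. fb x w c = 0) \<and> (\<forall>j x w. Dp j fb x w c = 0)"
    proof (rule ex1I[of _ fb])
      show "smooth3 fb \<and> (\<forall>j j' x w p. Dp j (Dp j' fb) x w p = FF j j' x w p) \<and>
             (\<forall>x w. fb x w c = 0) \<and> (\<forall>j x w. Dp j fb x w c = 0)" using fb by blast
      fix gb assume "smooth3 gb \<and> (\<forall>j j' x w p. Dp j (Dp j' gb) x w p = FF j j' x w p) \<and>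
             (\<forall>x w. gb x w c = 0) \<and> (\<forall>j x w. Dp j gb x w c = 0)"
      then show "gb = fb" using fb_unique[OF fb] by blast
    qed
    have ch: "\<forall>fb. smooth3 fb \<and> (\<forall>j j' x w p. Dp j (Dp j' fb) x w p = FF j j' x w p) \<and>
             (\<forall>x w. fb x w c = 0) \<and> (\<forall>j x w. Dp j fb x w c = 0) \<longrightarrow>
        (\<forall>f. is_solution FF F1 f \<longleftrightarrow>
           (\<exists>A :: 'm \<Rightarrow> 'm fn2. \<exists>A0 :: 'm fn2.
              (\<forall>j. smooth2 (A j)) \<and> smooth2 A0 \<and>
              (\<forall>j j' x w. Dw2 j (A j') x w - Dw2 j' (A j) x w = \<phi> j' j x w) \<and>
              (\<forall>j x w. Dw2 j A0 x w = \<psi> j x w + Dx2 (A j) x w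
                                      + (\<Sum>k\<in>UNIV. c $ k * Dw2 k (A j) x w)) \<and>
              f = (\<lambda>x w p. fb x w p + (\<Sum>j\<in>UNIV. A j x w * (p $ j - c $ j)) + A0 x w)))"
    proof (intro allI impI iffI)
      fix fb f
      assume fbs: "smooth3 fb \<and> (\<forall>j j' x w p. Dp j (Dp j' fb) x w p = FF j j' x w p) \<and>
             (\<forall>x w. fb x w c = 0) \<and> (\<forall>j x w. Dp j fb x w c = 0)"
      {
        assume sol: "is_solution FF F1 f"
        show "\<exists>A :: 'm \<Rightarrow> 'm fn2. \<exists>A0 :: 'm fn2.
              (\<forall>j. smooth2 (A j)) \<and> smooth2 A0 \<and>
              (\<forall>j j' x w. Dw2 j (A j') x w - Dw2 j' (A j) x w = \<phi> j' j x w) \<and>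
              (\<forall>j x w. Dw2 j A0 x w = \<psi> j x w + Dx2 (A j) x w
                                      + (\<Sum>k\<in>UNIV. c $ k * Dw2 k (A j) x w)) \<and>
              f = (\<lambda>x w p. fb x w p + (\<Sum>j\<in>UNIV. A j x w * (p $ j - c $ j)) + A0 x w)"
          unfolding phi psi using char_fwd[OF sol, where fb=fb and c=c] fbs by blast
      next
        assume "\<exists>A :: 'm \<Rightarrow> 'm fn2. \<exists>A0 :: 'm fn2.
              (\<forall>j. smooth2 (A j)) \<and> smooth2 A0 \<and>
              (\<forall>j j' x w. Dw2 j (A j') x w - Dw2 j' (A j) x w = \<phi> j' j x w) \<and>
              (\<forall>j x w. Dw2 j A0 x w = \<psi> j x w + Dx2 (A j) x w
                                      + (\<Sum>k\<in>UNIV. c $ k * Dw2 k (A j) x w)) \<and>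
              f = (\<lambda>x w p. fb x w p + (\<Sum>j\<in>UNIV. A j x w * (p $ j - c $ j)) + A0 x w)"
        then obtain A :: "'m \<Rightarrow> 'm fn2" and A0 :: "'m fn2" where
          AA: "\<forall>j. smooth2 (A j)" "smooth2 A0"
              "\<forall>j j' x w. Dw2 j (A j') x w - Dw2 j' (A j) x w = Phi FF F1 j' j x w c"
              "\<forall>j x w. Dw2 j A0 x w = F1 j x w c + Dx2 (A j) x w + (\<Sum>k\<in>UNIV. c $ k * Dw2 k (A j) x w)"
          and feq: "f = (\<lambda>x w p. fb x w p + (\<Sum>j\<in>UNIV. A j x w * (p $ j - c $ j)) + A0 x w)"
          unfolding phi psi by blast
        show "is_solution FF F1 f" unfolding feq
          using char_bwd[where FF=FF, OF FF_smooth F1_smooth cc _ _ _ _ AA] fbs by blast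
      }
    qed
    show "(\<exists>!fb. smooth3 fb \<and> (\<forall>j j' x w p. Dp j (Dp j' fb) x w p = FF j j' x w p) \<and>
             (\<forall>x w. fb x w c = 0) \<and> (\<forall>j x w. Dp j fb x w c = 0)) \<and>
      (\<forall>fb. smooth3 fb \<and> (\<forall>j j' x w p. Dp j (Dp j' fb) x w p = FF j j' x w p) \<and>
             (\<forall>x w. fb x w c = 0) \<and> (\<forall>j x w. Dp j fb x w c = 0) \<longrightarrow>
        (\<forall>f. is_solution FF F1 f \<longleftrightarrow>
           (\<exists>A :: 'm \<Rightarrow> 'm fn2. \<exists>A0 :: 'm fn2.
              (\<forall>j. smooth2 (A j)) \<and> smooth2 A0 \<and>
              (\<forall>j j' x w. Dw2 j (A j') x w - Dw2 j' (A j) x w = \<phi> j' j x w) \<and>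
              (\<forall>j x w. Dw2 j A0 x w = \<psi> j x w + Dx2 (A j) x w
                                      + (\<Sum>k\<in>UNIV. c $ k * Dw2 k (A j) x w)) \<and>
              f = (\<lambda>x w p. fb x w p + (\<Sum>j\<in>UNIV. A j x w * (p $ j - c $ j)) + A0 x w))))"
      using ex1 ch by blast
  qed
  show ?thesis using part1 part2 unfolding conds_def by blast
qed


end
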